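(* Let $m>1$, $\chi>0$, and let $p\ge2$ be an integer. If $\alpha\ge0$, then any critical point of $\mathcal F^p_{m,\alpha}$ in $\mathcal R^p$ is a global minimizer of $\mathcal F^p_{m,\alpha}$ on $\mathcal R^p$. In addition, when $\chi=C_p$, there exists a minimizer of $\mathcal F^p_m$ on $\mathcal R^p$, and it is unique up to dilation (i.e. any two minimizers $V,V'$ satisfy $V'=\lambda V$ for some $\lambda>0$).
   Context: $\mathcal R^p=\{X\in\mathbb R^p: X_1<\dots<X_p,\ \sum_iX_i=0\}$. $\mathcal F^p_{m,\alpha}(X)=\frac1{m-1}\sum_{i=1}^{p-1}(X_{i+1}-X_i)^{1-m}-\frac{\chi}{m-1}\sum_{1\le i\ne j\le p}|X_i-X_j|^{1-m}+\alpha\frac{|X|^2}{2}$, $\mathcal F^p_m=\mathcal F^p_{m,0}$. $C_p$ is defined by $\frac1{C_p}=\max_{X\in\mathcal R^p}\frac{\sum_{1\le i\ne j\le p}|X_j-X_i|^{1-m}}{\sum_{i=1}^{p-1}(X_{i+1}-X_i)^{1-m}}$. A critical point is a point of $\mathcal R^p$ where the Euclidean gradient vanishes. *)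

theory Defs
  imports "HOL-Analysis.Analysis"
begin

text \<open>Points of R^p are represented as functions nat => real; the coordinates
  X_1,...,X_p of the paper are X 0, ..., X (p-1); coordinates with index >= p are 0.\<close>

definition Rp :: "nat \<Rightarrow> (nat \<Rightarrow> real) set" where
  "Rp p = {X. (\<forall>i. Suc i < p \<longrightarrow> X i < X (Suc i)) \<and> (\<Sum>i<p. X i) = 0
              \<and> (\<forall>i\<ge>p. X i = 0)}"

definition Fma :: "real \<Rightarrow> real \<Rightarrow> real \<Rightarrow> nat \<Rightarrow> (nat \<Rightarrow> real) \<Rightarrow> real" where
  "Fma m chi alpha p X =
     1 / (m - 1) * (\<Sum>i<p - 1. (X (Suc i) - X i) powr (1 - m))
     - chi / (m - 1) * (\<Sum>i<p. \<Sum>j\<in>{..<p} - {i}. \<bar>X i - X j\<bar> powr (1 - m))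
     + alpha * (\<Sum>i<p. (X i)\<^sup>2) / 2"

abbreviation Fm :: "real \<Rightarrow> real \<Rightarrow> nat \<Rightarrow> (nat \<Rightarrow> real) \<Rightarrow> real" where
  "Fm m chi p \<equiv> Fma m chi 0 p"

definition critical_point :: "real \<Rightarrow> real \<Rightarrow> real \<Rightarrow> nat \<Rightarrow> (nat \<Rightarrow> real) \<Rightarrow> bool" where
  "critical_point m chi alpha p X \<longleftrightarrow> X \<in> Rp p \<and>
     (\<forall>i<p. ((\<lambda>t. Fma m chi alpha p (X(i := X i + t))) has_real_derivative 0) (at 0))"

definition ratio :: "real \<Rightarrow> nat \<Rightarrow> (nat \<Rightarrow> real) \<Rightarrow> real" where
  "ratio m p X = (\<Sum>i<p. \<Sum>j\<in>{..<p} - {i}. \<bar>X j - X i\<bar> powr (1 - m))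
                 / (\<Sum>i<p - 1. (X (Suc i) - X i) powr (1 - m))"

definition Cp :: "real \<Rightarrow> nat \<Rightarrow> real" where
  "Cp m p = 1 / (SUP X\<in>Rp p. ratio m p X)"

definition is_minimizer :: "((nat \<Rightarrow> real) \<Rightarrow> real) \<Rightarrow> (nat \<Rightarrow> real) set \<Rightarrow> (nat \<Rightarrow> real) \<Rightarrow> bool" where
  "is_minimizer F S V \<longleftrightarrow> V \<in> S \<and> (\<forall>Y\<in>S. F V \<le> F Y)"

end

theory Submission
  imports Defs
begin

lemma pw_deriv: "(k::real) > 0 \<Longrightarrow> x > 0 \<Longrightarrow> ((\<lambda>x. x powr (-k)) has_real_derivative (-k * x powr (-k-1))) (at x)"
  using has_real_derivative_powr[of x "-k"] by simp

lemma pw_strict_lt: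
  fixes k x y l :: real
  assumes k: "k > 0" and x: "x > 0" and xy: "x < y" and l: "0 < l" "l < 1"
  shows "((1-l)*x + l*y) powr (-k) < (1-l) * x powr (-k) + l * y powr (-k)"
proof -
  define f where "f = (\<lambda>x::real. x powr (-k))"
  define f' where "f' = (\<lambda>x::real. -k * x powr (-k-1))"
  define z where "z = (1-l)*x + l*y"
  have zx: "z - x = l*(y-x)" by (simp add: z_def algebra_simps)
  moreover have "l*(y-x) > 0" using xy l by simp
  ultimately have xz: "x < z" by simp
  have yz: "y - z = (1-l)*(y-x)" by (simp add: z_def algebra_simps)
  moreover have "(1-l)*(y-x) > 0" using xy l by simp
  ultimately have zy: "z < y" by simp
  have D: "\<And>t. t > 0 \<Longrightarrow> (f has_real_derivative f' t) (at t)"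
    unfolding f_def f'_def using pw_deriv[OF k] by blast
  obtain a where a: "x < a" "a < z" "f z - f x = (z - x) * f' a"
    using MVT2[of x z f f'] D xz x by (meson less_le_trans)
  obtain b where b: "z < b" "b < y" "f y - f z = (y - z) * f' b"
    using MVT2[of z y f f'] D zy xz x by (meson less_le_trans less_trans)
  have "b powr (-k-1) < a powr (-k-1)"
    using a b x k by (intro powr_less_mono2_neg) auto
  hence fab: "f' a < f' b" unfolding f'_def using k by simp
  have e1: "f x - f z = -((z-x)*f' a)" using a(3) by simp
  have e2: "f y - f z = (y-z)*f' b" using b(3) by simp
  have "(1-l) * f x + l * f y - f z = (1-l)*(f x - f z) + l * (f y - f z)" by (simp add: algebra_simps)
  also have "\<dots> = (1-l)*(-((z-x)*f' a)) + l*((y-z)*f' b)" by (simp only: e1 e2)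
  also have "\<dots> = l*(1-l)*(y-x)*(f' b - f' a)"
    by (simp add: zx yz algebra_simps)
  also have "\<dots> > 0" using fab l xy by simp
  finally show ?thesis unfolding f_def z_def by simp
qed

lemma pw_strict:
  fixes k x y l :: real
  assumes k: "k > 0" and x: "x > 0" and y: "y > 0" and xy: "x \<noteq> y" and l: "0 < l" "l < 1"
  shows "((1-l)*x + l*y) powr (-k) < (1-l) * x powr (-k) + l * y powr (-k)"
proof (cases "x < y")
  case True then show ?thesis using pw_strict_lt[OF k x True l] by simp
next
  case False
  hence "y < x" using xy by simp
  from pw_strict_lt[OF k y this, of "1-l"] l show ?thesis by (simp add: algebra_simps)
qed

lemma pw_convex:
  fixes k x y l :: real
  assumes k: "k > 0" and x: "x > 0" and y: "y > 0" and l: "0 \<le> l" "l \<le> 1"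
  shows "((1-l)*x + l*y) powr (-k) \<le> (1-l) * x powr (-k) + l * y powr (-k)"
proof -
  consider "x = y" | "l = 0" | "l = 1" | "x \<noteq> y" "0 < l" "l < 1" using l by linarith
  then show ?thesis
  proof cases
    case 1 then show ?thesis by (simp add: algebra_simps)
  next
    case 4 then show ?thesis using pw_strict[OF k x y] by (simp add: less_imp_le)
  qed auto
qed

definition Mt :: "real \<Rightarrow> real \<Rightarrow> real \<Rightarrow> real \<Rightarrow> real" where
  "Mt k t a b = ((1-t) * a powr (-k) + t * b powr (-k)) powr (-1/k)"

lemma lin_pos: "(a::real) > 0 \<Longrightarrow> b > 0 \<Longrightarrow> 0 \<le> t \<Longrightarrow> t \<le> 1 \<Longrightarrow> (1-t) * a + t * b > 0"
proof -
  assume a: "a > 0" and b: "b > 0" and t: "0 \<le> t" "t \<le> 1"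
  show ?thesis
  proof (cases "t < 1")
    case True
    hence "(1-t)*a > 0" using a by simp
    moreover have "t * b \<ge> 0" using t b by simp
    ultimately show ?thesis by linarith
  next
    case False
    hence "t = 1" using t by simp
    thus ?thesis using b by simp
  qed
qed

lemma base_pos: "(a::real) > 0 \<Longrightarrow> b > 0 \<Longrightarrow> 0 \<le> t \<Longrightarrow> t \<le> 1 \<Longrightarrow> (1-t) * a powr (-k) + t * b powr (-k) > 0"
  using lin_pos[of "a powr (-k)" "b powr (-k)" t] by simp

lemma Mt_pos: "(a::real) > 0 \<Longrightarrow> b > 0 \<Longrightarrow> 0 \<le> t \<Longrightarrow> t \<le> 1 \<Longrightarrow> Mt k t a b > 0"
proof -
  assume "(a::real) > 0" "b > 0" "0 \<le> t" "t \<le> 1"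
  then have "(1-t) * a powr (-k) + t * b powr (-k) > 0" by (rule base_pos)
  thus ?thesis unfolding Mt_def by simp
qed

lemma Mt_pow: "(k::real) > 0 \<Longrightarrow> a > 0 \<Longrightarrow> b > 0 \<Longrightarrow> 0 \<le> t \<Longrightarrow> t \<le> 1 \<Longrightarrow>
   Mt k t a b powr (-k) = (1-t) * a powr (-k) + t * b powr (-k)"
proof -
  assume k: "k > 0" and a: "a > 0" and b: "b > 0" and t: "0 \<le> t" "t \<le> 1"
  define B where "B = (1-t) * a powr (-k) + t * b powr (-k)"
  have B: "B > 0" using base_pos[OF a b t] by (simp add: B_def)
  have "(B powr (-1/k)) powr (-k) = B powr ((-1/k)*(-k))" by (rule powr_powr)
  also have "(-1/k)*(-k) = 1" using k by (simp add: field_simps)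
  finally show ?thesis using B unfolding Mt_def B_def by simp
qed

lemma powr_inv_k: "(k::real) > 0 \<Longrightarrow> x > 0 \<Longrightarrow> (x powr (-k)) powr (-1/k) = x"
proof -
  assume k: "k > 0" and x: "x > 0"
  have "(x powr (-k)) powr (-1/k) = x powr ((-k)*(-1/k))" by (rule powr_powr)
  also have "(-k)*(-1/k) = 1" using k by (simp add: field_simps)
  finally show ?thesis using x by simp
qed

lemma powr_inv_k': "(k::real) > 0 \<Longrightarrow> x > 0 \<Longrightarrow> (x powr (-k)) powr (-(1/k)) = x"
  using powr_inv_k[of k x] by simp

lemma Mt_zero: "(k::real) > 0 \<Longrightarrow> a > 0 \<Longrightarrow> Mt k 0 a b = a"
  unfolding Mt_def by (simp add: powr_inv_k')

lemma Mt_one: "(k::real) > 0 \<Longrightarrow> b > 0 \<Longrightarrow> Mt k 1 a b = b"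
  unfolding Mt_def by (simp add: powr_inv_k')

lemma Mt_le_lin:
  assumes k: "k > 0" and a: "a > 0" and b: "b > 0" and t: "0 \<le> t" "t \<le> 1"
  shows "Mt k t a b \<le> (1-t)*a + t*b"
proof -
  have c: "(1-t)*a + t*b > 0" using a b t by (rule lin_pos)
  have "((1-t)*a + t*b) powr (-k) \<le> (1-t) * a powr (-k) + t * b powr (-k)"
    using pw_convex[OF k a b t] .
  hence "((1-t) * a powr (-k) + t * b powr (-k)) powr (-1/k) \<le> (((1-t)*a + t*b) powr (-k)) powr (-1/k)"
    using k c by (intro powr_mono2') auto
  thus ?thesis unfolding Mt_def using powr_inv_k[OF k c] by simp
qed

lemma jen_split:
  fixes k a b A B :: real
  assumes k: "k > 0" and a: "a > 0" and b: "b > 0" and A: "A > 0" and B: "B > 0"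
  shows "(a+b) powr (-k) \<le> (A+B) powr (-k) * ((A/(A+B)) * (a/A) powr (-k) + (B/(A+B)) * (b/B) powr (-k))"
    and "a/A \<noteq> b/B \<Longrightarrow> (a+b) powr (-k) < (A+B) powr (-k) * ((A/(A+B)) * (a/A) powr (-k) + (B/(A+B)) * (b/B) powr (-k))"
proof -
  define mu where "mu = B/(A+B)"
  have mu: "0 < mu" "mu < 1" using A B by (auto simp: mu_def field_simps)
  have mu1: "1 - mu = A/(A+B)" using A B by (simp add: mu_def field_simps)
  have AB: "A + B \<noteq> 0" using A B by simp
  have h1: "(A+B)*(A/(A+B)) = A" using AB by simp
  have h2: "(A+B)*(B/(A+B)) = B" using AB by simp
  have "(A+B) * ((1-mu)*(a/A) + mu*(b/B)) = (A+B)*((A/(A+B))*(a/A)) + (A+B)*((B/(A+B))*(b/B))"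
    by (subst mu1, unfold mu_def, rule distrib_left)
  also have "\<dots> = ((A+B)*(A/(A+B)))*(a/A) + ((A+B)*(B/(A+B)))*(b/B)"
    by (simp only: mult.assoc)
  also have "\<dots> = a + b" using h1 h2 A B by simp
  finally have ab: "a + b = (A+B) * ((1-mu)*(a/A) + mu*(b/B))" by simp
  have pos: "(1-mu)*(a/A) + mu*(b/B) > 0" using mu a b A B by (intro lin_pos) auto
  have eq: "(a+b) powr (-k) = (A+B) powr (-k) * ((1-mu)*(a/A) + mu*(b/B)) powr (-k)"
    unfolding ab using A B pos by (simp add: powr_mult)
  have Apos: "(A+B) powr (-k) > 0" using A B by simp
  show "(a+b) powr (-k) \<le> (A+B) powr (-k) * ((A/(A+B)) * (a/A) powr (-k) + (B/(A+B)) * (b/B) powr (-k))"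
    unfolding eq mu1[symmetric] mu_def[symmetric]
    using pw_convex[OF k, of "a/A" "b/B" mu] mu a b A B Apos by (intro mult_left_mono) auto
  assume ne: "a/A \<noteq> b/B"
  show "(a+b) powr (-k) < (A+B) powr (-k) * ((A/(A+B)) * (a/A) powr (-k) + (B/(A+B)) * (b/B) powr (-k))"
    unfolding eq mu1[symmetric] mu_def[symmetric]
    using pw_strict[OF k, of "a/A" "b/B" mu] mu a b A B Apos ne by (intro mult_strict_left_mono) auto
qed

lemma Mt_norm:
  fixes k t a0 a1 :: real
  assumes k: "k > 0" and a: "a0 > 0" "a1 > 0" and t: "0 \<le> t" "t \<le> 1"
  shows "(1-t) * (a0 / Mt k t a0 a1) powr (-k) + t * (a1 / Mt k t a0 a1) powr (-k) = 1"
proof -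
  define A where "A = Mt k t a0 a1"
  have A: "A > 0" unfolding A_def using Mt_pos a t by auto
  have "A powr (-k) = (1-t) * a0 powr (-k) + t * a1 powr (-k)" unfolding A_def using Mt_pow[OF k a t] .
  moreover have "A powr (-k) > 0" using A by simp
  ultimately show ?thesis unfolding A_def[symmetric] using A a
    by (simp add: powr_divide field_simps)
qed

lemma Mt_super_base:
  fixes k t a0 a1 b0 b1 :: real
  assumes k: "k > 0" and a: "a0 > 0" "a1 > 0" and b: "b0 > 0" "b1 > 0" and t: "0 \<le> t" "t \<le> 1"
  defines "A \<equiv> Mt k t a0 a1" and "B \<equiv> Mt k t b0 b1"
  shows "(1-t) * (a0+b0) powr (-k) + t * (a1+b1) powr (-k) \<le> (A+B) powr (-k)"
    and "0 < t \<Longrightarrow> t < 1 \<Longrightarrow> (a0/A \<noteq> b0/B \<or> a1/A \<noteq> b1/B) \<Longrightarrow>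
         (1-t) * (a0+b0) powr (-k) + t * (a1+b1) powr (-k) < (A+B) powr (-k)"
proof -
  have A: "A > 0" unfolding A_def using Mt_pos a t by auto
  have B: "B > 0" unfolding B_def using Mt_pos b t by auto
  define C where "C = (A+B) powr (-k)"
  define wA where "wA = A/(A+B)"
  define wB where "wB = B/(A+B)"
  have wAB: "wA + wB = 1" unfolding wA_def wB_def using A B by (simp add: add_divide_distrib[symmetric])
  define R0 where "R0 = C * (wA * (a0/A) powr (-k) + wB * (b0/B) powr (-k))"
  define R1 where "R1 = C * (wA * (a1/A) powr (-k) + wB * (b1/B) powr (-k))"
  have J0: "(a0+b0) powr (-k) \<le> R0" unfolding R0_def C_def wA_def wB_def by (rule jen_split(1)[OF k a(1) b(1) A B])
  have J1: "(a1+b1) powr (-k) \<le> R1" unfolding R1_def C_def wA_def wB_def by (rule jen_split(1)[OF k a(2) b(2) A B])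
  have S0: "a0/A \<noteq> b0/B \<Longrightarrow> (a0+b0) powr (-k) < R0" unfolding R0_def C_def wA_def wB_def by (rule jen_split(2)[OF k a(1) b(1) A B])
  have S1: "a1/A \<noteq> b1/B \<Longrightarrow> (a1+b1) powr (-k) < R1" unfolding R1_def C_def wA_def wB_def by (rule jen_split(2)[OF k a(2) b(2) A B])
  have nA: "(1-t) * (a0 / A) powr (-k) + t * (a1 / A) powr (-k) = 1" unfolding A_def by (rule Mt_norm[OF k a t])
  have nB: "(1-t) * (b0 / B) powr (-k) + t * (b1 / B) powr (-k) = 1" unfolding B_def by (rule Mt_norm[OF k b t])
  have "(1-t) * R0 + t * R1 = C * (wA * ((1-t) * (a0 / A) powr (-k) + t * (a1 / A) powr (-k))
        + wB * ((1-t) * (b0 / B) powr (-k) + t * (b1 / B) powr (-k)))"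
    unfolding R0_def R1_def by (simp add: algebra_simps)
  also have "\<dots> = C" unfolding nA nB using wAB by simp
  finally have RC: "(1-t) * R0 + t * R1 = C" .
  have t1: "0 \<le> 1 - t" using t by simp
  show "(1-t) * (a0+b0) powr (-k) + t * (a1+b1) powr (-k) \<le> (A+B) powr (-k)"
    unfolding C_def[symmetric] RC[symmetric]
    using mult_left_mono[OF J0 t1] mult_left_mono[OF J1 t(1)] by linarith
  assume t': "0 < t" "t < 1" and ne: "a0/A \<noteq> b0/B \<or> a1/A \<noteq> b1/B"
  have t1': "0 < 1 - t" using t' by simp
  from ne show "(1-t) * (a0+b0) powr (-k) + t * (a1+b1) powr (-k) < (A+B) powr (-k)"
  proof
    assume "a0/A \<noteq> b0/B"
    then show ?thesis unfolding C_def[symmetric] RC[symmetric]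
      using mult_strict_left_mono[OF S0 t1'] mult_left_mono[OF J1 t(1)] by linarith
  next
    assume "a1/A \<noteq> b1/B"
    then show ?thesis unfolding C_def[symmetric] RC[symmetric]
      using mult_left_mono[OF J0 t1] mult_strict_left_mono[OF S1 t'(1)] by linarith
  qed
qed

lemma Mt_super:
  fixes k t a0 a1 b0 b1 :: real
  assumes k: "k > 0" and a: "a0 > 0" "a1 > 0" and b: "b0 > 0" "b1 > 0" and t: "0 \<le> t" "t \<le> 1"
  shows "Mt k t a0 a1 + Mt k t b0 b1 \<le> Mt k t (a0+b0) (a1+b1)"
proof -
  define A where "A = Mt k t a0 a1"
  define B where "B = Mt k t b0 b1"
  have A: "A > 0" unfolding A_def using Mt_pos a t by auto
  have B: "B > 0" unfolding B_def using Mt_pos b t by auto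
  have base: "(1-t) * (a0+b0) powr (-k) + t * (a1+b1) powr (-k) > 0"
    using a b t by (intro base_pos) auto
  have "((A+B) powr (-k)) powr (-1/k) \<le> ((1-t) * (a0+b0) powr (-k) + t * (a1+b1) powr (-k)) powr (-1/k)"
    using Mt_super_base(1)[OF k a b t] base k unfolding A_def B_def by (intro powr_mono2') auto
  thus ?thesis unfolding Mt_def[of k t "a0+b0"] A_def[symmetric] B_def[symmetric]
    using powr_inv_k[OF k, of "A+B"] A B by simp
qed

lemma Mt_super_eq:
  fixes k t a0 a1 b0 b1 :: real
  assumes k: "k > 0" and a: "a0 > 0" "a1 > 0" and b: "b0 > 0" "b1 > 0" and t: "0 < t" "t < 1"
    and eq: "Mt k t a0 a1 + Mt k t b0 b1 = Mt k t (a0+b0) (a1+b1)"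
  shows "a0 * b1 = a1 * b0"
proof -
  have t': "0 \<le> t" "t \<le> 1" using t by auto
  define A where "A = Mt k t a0 a1"
  define B where "B = Mt k t b0 b1"
  have A: "A > 0" unfolding A_def using Mt_pos a t' by auto
  have B: "B > 0" unfolding B_def using Mt_pos b t' by auto
  have "(A+B) powr (-k) = Mt k t (a0+b0) (a1+b1) powr (-k)" using eq unfolding A_def B_def by simp
  also have "\<dots> = (1-t) * (a0+b0) powr (-k) + t * (a1+b1) powr (-k)"
    using a b t' k by (intro Mt_pow) auto
  finally have E: "(1-t) * (a0+b0) powr (-k) + t * (a1+b1) powr (-k) = (A+B) powr (-k)" by simp
  have "a0/A = b0/B \<and> a1/A = b1/B"
  proof (rule ccontr)
    assume "\<not> (a0/A = b0/B \<and> a1/A = b1/B)"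
    hence "(1-t) * (a0+b0) powr (-k) + t * (a1+b1) powr (-k) < (A+B) powr (-k)"
      using Mt_super_base(2)[OF k a b t' t] unfolding A_def B_def by blast
    with E show False by simp
  qed
  hence "a0 = A*b0/B" "a1 = A*b1/B" using A B by (auto simp: field_simps)
  thus ?thesis by simp
qed

lemma Mt_super_sum:
  fixes k t :: real and f h :: "nat \<Rightarrow> real"
  assumes k: "k > 0" and t: "0 \<le> t" "t \<le> 1"
  shows "finite S \<Longrightarrow> S \<noteq> {} \<Longrightarrow> (\<forall>l\<in>S. f l > 0 \<and> h l > 0) \<Longrightarrow>
    (\<Sum>l\<in>S. Mt k t (f l) (h l)) \<le> Mt k t (\<Sum>l\<in>S. f l) (\<Sum>l\<in>S. h l)"
proof (induction S rule: finite_ne_induct)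
  case (singleton x) then show ?case by simp
next
  case (insert x F)
  have pf: "(\<Sum>l\<in>F. f l) > 0" "(\<Sum>l\<in>F. h l) > 0"
    using insert by (auto intro!: sum_pos)
  have "(\<Sum>l\<in>insert x F. Mt k t (f l) (h l)) = Mt k t (f x) (h x) + (\<Sum>l\<in>F. Mt k t (f l) (h l))"
    using insert by simp
  also have "\<dots> \<le> Mt k t (f x) (h x) + Mt k t (\<Sum>l\<in>F. f l) (\<Sum>l\<in>F. h l)"
    using insert by simp
  also have "\<dots> \<le> Mt k t (f x + (\<Sum>l\<in>F. f l)) (h x + (\<Sum>l\<in>F. h l))"
    using insert pf by (intro Mt_super[OF k _ _ _ _ t]) auto
  finally show ?case using insert by simp
qed

definition gap :: "(nat \<Rightarrow> real) \<Rightarrow> nat \<Rightarrow> real" where "gap X l = X (Suc l) - X l"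

definition cfg :: "nat \<Rightarrow> (nat \<Rightarrow> real) \<Rightarrow> nat \<Rightarrow> real" where
  "cfg p g i = (if i < p then (\<Sum>l<i. g l) - (\<Sum>q<p. \<Sum>l<q. g l) / real p else 0)"

definition Dd :: "(nat \<Rightarrow> real) \<Rightarrow> nat \<Rightarrow> nat \<Rightarrow> real" where
  "Dd g i j = (\<Sum>l\<in>{min i j..<max i j}. g l)"

lemma Dd_sym: "Dd g i j = Dd g j i"
  unfolding Dd_def by (simp add: min.commute max.commute)

lemma sum_split_lt: "(j::nat) \<le> i \<Longrightarrow> (\<Sum>l<i. g l) = (\<Sum>l<j. g l) + (\<Sum>l\<in>{j..<i}. (g l :: real))"
  using sum.atLeastLessThan_concat[of 0 j i g] by (simp add: atLeast0LessThan)

lemma cfg_diff: "j \<le> i \<Longrightarrow> i < p \<Longrightarrow> cfg p g i - cfg p g j = (\<Sum>l\<in>{j..<i}. g l)"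
  unfolding cfg_def using sum_split_lt[of j i g] by simp

lemma cfg_abs:
  assumes "i < p" "j < p" "\<forall>l. Suc l < p \<longrightarrow> g l \<ge> 0"
  shows "\<bar>cfg p g i - cfg p g j\<bar> = Dd g i j"
proof (cases "j \<le> i")
  case True
  have "(\<Sum>l\<in>{j..<i}. g l) \<ge> 0" using assms by (intro sum_nonneg) auto
  then show ?thesis using cfg_diff[OF True assms(1), of g] True unfolding Dd_def by simp
next
  case False
  hence ij: "i \<le> j" by simp
  have "(\<Sum>l\<in>{i..<j}. g l) \<ge> 0" using assms by (intro sum_nonneg) auto
  then show ?thesis using cfg_diff[OF ij assms(2), of g] ij unfolding Dd_def by simp
qed

lemma cfg_sum: "(\<Sum>i<p. cfg p g i) = 0"
proof (cases "p = 0")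
  case False
  have "(\<Sum>i<p. cfg p g i) = (\<Sum>i<p. (\<Sum>l<i. g l)) - real p * ((\<Sum>q<p. \<Sum>l<q. g l) / real p)"
    unfolding cfg_def by (simp add: sum_subtractf)
  also have "\<dots> = 0" using False by simp
  finally show ?thesis .
qed simp

lemma cfg_Suc: "Suc i < p \<Longrightarrow> cfg p g (Suc i) - cfg p g i = g i"
  using cfg_diff[of i "Suc i" p g] by simp

lemma cfg_in_Rp: "(\<forall>l. Suc l < p \<longrightarrow> g l > 0) \<Longrightarrow> cfg p g \<in> Rp p"
  unfolding Rp_def using cfg_sum[of p g] cfg_Suc[of _ p g]
  by (auto simp: cfg_def[of p g])

lemma gap_cfg: "Suc l < p \<Longrightarrow> gap (cfg p g) l = g l"
  unfolding gap_def using cfg_Suc by simp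

lemma gap_pos: "X \<in> Rp p \<Longrightarrow> Suc l < p \<Longrightarrow> gap X l > 0"
  unfolding Rp_def gap_def by auto

lemma cfg_gap:
  assumes X: "X \<in> Rp p"
  shows "cfg p (gap X) = X"
proof
  fix i
  have tel: "\<And>i. (\<Sum>l<i. gap X l) = X i - X 0" unfolding gap_def by (rule sum_lessThan_telescope)
  have s0: "(\<Sum>q<p. X q) = 0" using X unfolding Rp_def by simp
  have "(\<Sum>q<p. \<Sum>l<q. gap X l) = (\<Sum>q<p. X q) - real p * X 0"
    unfolding tel by (simp add: sum_subtractf)
  have S': "(\<Sum>q<p. X q - X 0) = - real p * X 0" using s0 by (simp add: sum_subtractf)
  show "cfg p (gap X) i = X i"
  proof (cases "i < p")
    case True
    hence "p > 0" by simp
    then show ?thesis unfolding cfg_def tel S' using True by simp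
  next
    case False
    then show ?thesis using X unfolding Rp_def cfg_def by auto
  qed
qed

lemma cfg_scale: "cfg p (\<lambda>l. c * g l) = (\<lambda>i. c * cfg p g i)"
  unfolding cfg_def by (auto simp: sum_distrib_left[symmetric] algebra_simps)

lemma cfg_cong: "(\<forall>l. Suc l < p \<longrightarrow> g l = h l) \<Longrightarrow> cfg p g = cfg p h"
proof -
  assume H: "\<forall>l. Suc l < p \<longrightarrow> g l = h l"
  have E: "\<And>i. i < p \<Longrightarrow> (\<Sum>l<i. g l) = (\<Sum>l<i. h l)"
  proof (intro sum.cong refl)
    fix i l assume "i < p" "l \<in> {..<i}"
    then show "g l = h l" using H by auto
  qed
  have E2: "(\<Sum>q<p. \<Sum>l<q. g l) = (\<Sum>q<p. \<Sum>l<q. h l)" by (rule sum.cong[OF refl]) (simp add: E)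
  show ?thesis unfolding cfg_def E2 by (auto simp: E)
qed

lemma sq_sum_identity:
  fixes X :: "nat \<Rightarrow> real"
  assumes T: "(\<Sum>i<p. X i) = 0"
  shows "(\<Sum>i<p. \<Sum>j<p. (X i - X j)^2) = 2 * real p * (\<Sum>i<p. (X i)^2)"
proof -
  have "(\<Sum>i<p. \<Sum>j<p. (X i - X j)^2) = (\<Sum>i<p. \<Sum>j<p. (X i)^2 + (X j)^2 - 2 * X i * X j)"
    by (simp add: power2_diff)
  also have "\<dots> = (\<Sum>i<p. real p * (X i)^2 + (\<Sum>j<p. (X j)^2) - 2 * X i * (\<Sum>j<p. X j))"
    by (intro sum.cong refl) (simp add: sum.distrib sum_subtractf sum_distrib_left)
  also have "\<dots> = (\<Sum>i<p. real p * (X i)^2 + (\<Sum>j<p. (X j)^2))"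
    unfolding T by simp
  also have "\<dots> = 2 * real p * (\<Sum>i<p. (X i)^2)"
    by (simp add: sum.distrib sum_distrib_left mult.assoc)
  finally show ?thesis .
qed

definition S1 :: "real \<Rightarrow> nat \<Rightarrow> (nat \<Rightarrow> real) \<Rightarrow> real" where
  "S1 m p g = (\<Sum>i<p-1. g i powr (1-m))"
definition S2 :: "real \<Rightarrow> nat \<Rightarrow> (nat \<Rightarrow> real) \<Rightarrow> real" where
  "S2 m p g = (\<Sum>i<p. \<Sum>j\<in>{..<p}-{i}. Dd g i j powr (1-m))"
definition S3 :: "nat \<Rightarrow> (nat \<Rightarrow> real) \<Rightarrow> real" where
  "S3 p g = (\<Sum>i<p. \<Sum>j<p. (Dd g i j)^2)"

lemma Fma_cfg:
  assumes g: "\<forall>l. Suc l < p \<longrightarrow> g l > 0" and p: "p \<ge> 1"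
  shows "Fma m chi alpha p (cfg p g) = 1/(m-1) * S1 m p g - chi/(m-1) * S2 m p g + alpha * (S3 p g / (2 * real p)) / 2"
proof -
  define X where "X = cfg p g"
  have g0: "\<forall>l. Suc l < p \<longrightarrow> g l \<ge> 0" using g by (simp add: less_imp_le)
  have T1: "(\<Sum>i<p - 1. (X (Suc i) - X i) powr (1 - m)) = S1 m p g"
    unfolding S1_def X_def by (intro sum.cong) (auto simp: cfg_Suc)
  have T2: "(\<Sum>i<p. \<Sum>j\<in>{..<p} - {i}. \<bar>X i - X j\<bar> powr (1 - m)) = S2 m p g"
    unfolding S2_def X_def using cfg_abs[OF _ _ g0] by (intro sum.cong) auto
  have "(\<Sum>i<p. \<Sum>j<p. (X i - X j)^2) = S3 p g"
    unfolding S3_def X_def using cfg_abs[OF _ _ g0]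
    by (intro sum.cong refl) (metis power2_abs lessThan_iff)
  hence T3: "(\<Sum>i<p. (X i)^2) = S3 p g / (2 * real p)"
    using sq_sum_identity[of X p] cfg_sum[of p g] p unfolding X_def by (simp add: field_simps)
  show ?thesis unfolding Fma_def X_def[symmetric] T1 T2 T3 by simp
qed

lemma ratio_cfg:
  assumes g: "\<forall>l. Suc l < p \<longrightarrow> g l > 0"
  shows "ratio m p (cfg p g) = S2 m p g / S1 m p g"
proof -
  define X where "X = cfg p g"
  have g0: "\<forall>l. Suc l < p \<longrightarrow> g l \<ge> 0" using g by (simp add: less_imp_le)
  have T1: "(\<Sum>i<p - 1. (X (Suc i) - X i) powr (1 - m)) = S1 m p g"
    unfolding S1_def X_def by (intro sum.cong) (auto simp: cfg_Suc)
  have T2: "(\<Sum>i<p. \<Sum>j\<in>{..<p} - {i}. \<bar>X j - X i\<bar> powr (1 - m)) = S2 m p g"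
    unfolding S2_def X_def using cfg_abs[OF _ _ g0] Dd_sym by (intro sum.cong) auto
  show ?thesis unfolding ratio_def X_def[symmetric] T1 T2 ..
qed

lemma sq_convex: "0 \<le> t \<Longrightarrow> t \<le> 1 \<Longrightarrow> ((1-t)*a + t*b)^2 \<le> (1-t)*a^2 + t*(b::real)^2"
proof -
  assume t: "0 \<le> t" "t \<le> 1"
  have "(1-t)*a^2 + t*b^2 - ((1-t)*a + t*b)^2 = t*(1-t)*(a-b)^2"
    by (simp add: power2_eq_square algebra_simps)
  moreover have "t*(1-t)*(a-b)^2 \<ge> 0" using t by simp
  ultimately show ?thesis by linarith
qed

lemma Dd_range: "l \<in> {min i j..<max i j} \<Longrightarrow> i < p \<Longrightarrow> j < p \<Longrightarrow> Suc l < p"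
  by auto

lemma Dd_pos: "(\<forall>l. Suc l < p \<longrightarrow> g l > 0) \<Longrightarrow> i < p \<Longrightarrow> j < p \<Longrightarrow> i \<noteq> j \<Longrightarrow> Dd g i j > 0"
  unfolding Dd_def by (intro sum_pos) (auto simp: min_def max_def split: if_splits)

lemma Dd_nonneg: "(\<forall>l. Suc l < p \<longrightarrow> g l > 0) \<Longrightarrow> i < p \<Longrightarrow> j < p \<Longrightarrow> Dd g i j \<ge> 0"
  unfolding Dd_def by (intro sum_nonneg) (auto simp: min_def max_def less_imp_le split: if_splits)

context
  fixes m chi alpha t :: real and p :: nat and g0 g1 :: "nat \<Rightarrow> real"
  assumes m: "m > 1" and p: "p \<ge> 1"
    and g0: "\<forall>l. Suc l < p \<longrightarrow> g0 l > 0" and g1: "\<forall>l. Suc l < p \<longrightarrow> g1 l > 0"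
    and t: "0 \<le> t" "t \<le> 1"
begin

definition "gt = (\<lambda>l. Mt (m-1) t (g0 l) (g1 l))"

lemma k: "m - 1 > 0" using m by simp

lemma gt_pos: "\<forall>l. Suc l < p \<longrightarrow> gt l > 0"
  unfolding gt_def using g0 g1 t Mt_pos by auto

lemma e1m: "x powr (1-m) = x powr (-(m-1))" by simp

lemma S1_gt: "S1 m p gt = (1-t) * S1 m p g0 + t * S1 m p g1"
proof -
  have "S1 m p gt = (\<Sum>i<p-1. (1-t) * g0 i powr (1-m) + t * g1 i powr (1-m))"
    unfolding S1_def gt_def e1m
  proof (intro sum.cong refl)
    fix i assume "i \<in> {..<p-1}"
    hence "Suc i < p" by auto
    then show "Mt (m - 1) t (g0 i) (g1 i) powr - (m - 1) = (1 - t) * g0 i powr - (m - 1) + t * g1 i powr - (m - 1)"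
      using Mt_pow[OF k, of "g0 i" "g1 i" t] g0 g1 t by auto
  qed
  thus ?thesis unfolding S1_def by (simp add: sum.distrib sum_distrib_left)
qed

lemma Dd_gt_le_Mt:
  assumes ij: "i < p" "j < p" "i \<noteq> j"
  shows "Dd gt i j \<le> Mt (m-1) t (Dd g0 i j) (Dd g1 i j)"
  unfolding Dd_def gt_def
  using ij g0 g1 by (intro Mt_super_sum[OF k t]) (auto simp: min_def max_def)

lemma Dd_gt_term:
  assumes ij: "i < p" "j < p" "i \<noteq> j"
  shows "(1-t) * Dd g0 i j powr (1-m) + t * Dd g1 i j powr (1-m) \<le> Dd gt i j powr (1-m)"
proof -
  have D0: "Dd g0 i j > 0" using Dd_pos[OF g0 ij] .
  have D1: "Dd g1 i j > 0" using Dd_pos[OF g1 ij] .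
  have Dt: "Dd gt i j > 0" using Dd_pos[OF gt_pos ij] .
  have "(1-t) * Dd g0 i j powr (1-m) + t * Dd g1 i j powr (1-m) = Mt (m-1) t (Dd g0 i j) (Dd g1 i j) powr (-(m-1))"
    unfolding e1m using Mt_pow[OF k D0 D1 t] by simp
  also have "\<dots> \<le> Dd gt i j powr (-(m-1))"
    using Dd_gt_le_Mt[OF ij] Dt k by (intro powr_mono2') auto
  finally show ?thesis by simp
qed

lemma S2_gt: "(1-t) * S2 m p g0 + t * S2 m p g1 \<le> S2 m p gt"
proof -
  have "(1-t) * S2 m p g0 + t * S2 m p g1 =
     (\<Sum>i<p. \<Sum>j\<in>{..<p}-{i}. (1-t) * Dd g0 i j powr (1-m) + t * Dd g1 i j powr (1-m))"
    unfolding S2_def by (simp add: sum.distrib sum_distrib_left)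
  also have "\<dots> \<le> S2 m p gt" unfolding S2_def
    using Dd_gt_term by (intro sum_mono) auto
  finally show ?thesis .
qed

lemma Dd_gt_lin:
  assumes ij: "i < p" "j < p"
  shows "Dd gt i j \<le> (1-t) * Dd g0 i j + t * Dd g1 i j"
proof -
  have "Dd gt i j \<le> (\<Sum>l\<in>{min i j..<max i j}. (1-t) * g0 l + t * g1 l)"
    unfolding Dd_def gt_def using ij g0 g1 t
    by (intro sum_mono Mt_le_lin[OF k]) (auto simp: min_def max_def split: if_splits)
  thus ?thesis unfolding Dd_def by (simp add: sum.distrib sum_distrib_left)
qed

lemma S3_gt: "S3 p gt \<le> (1-t) * S3 p g0 + t * S3 p g1"
proof -
  have "S3 p gt \<le> (\<Sum>i<p. \<Sum>j<p. (1-t) * (Dd g0 i j)^2 + t * (Dd g1 i j)^2)"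
    unfolding S3_def
  proof (intro sum_mono)
    fix i j assume ij: "i \<in> {..<p}" "j \<in> {..<p}"
    have "(Dd gt i j)^2 \<le> ((1-t) * Dd g0 i j + t * Dd g1 i j)^2"
      using Dd_gt_lin Dd_nonneg[OF gt_pos] ij by (intro power_mono) auto
    also have "\<dots> \<le> (1-t) * (Dd g0 i j)^2 + t * (Dd g1 i j)^2" using sq_convex t by simp
    finally show "(Dd gt i j)^2 \<le> (1-t) * (Dd g0 i j)^2 + t * (Dd g1 i j)^2" .
  qed
  thus ?thesis unfolding S3_def by (simp add: sum.distrib sum_distrib_left)
qed

lemma Fma_cfg': "(\<forall>l. Suc l < p \<longrightarrow> g l > 0) \<Longrightarrow>
   Fma m chi alpha p (cfg p g) = 1/(m-1) * S1 m p g - chi/(m-1) * S2 m p g + alpha/(4*real p) * S3 p g"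
  using Fma_cfg[of p g m chi alpha] p by simp

lemma chord:
  assumes chi: "chi \<ge> 0" and al: "alpha \<ge> 0"
  shows "Fma m chi alpha p (cfg p gt) \<le> (1-t) * Fma m chi alpha p (cfg p g0) + t * Fma m chi alpha p (cfg p g1)"
proof -
  define c1 where "c1 = 1/(m-1)"
  define c2 where "c2 = chi/(m-1)"
  define c3 where "c3 = alpha/(4*real p)"
  have c2: "c2 \<ge> 0" using chi k unfolding c2_def by simp
  have c3: "c3 \<ge> 0" using al unfolding c3_def by simp
  have A: "c2 * ((1-t) * S2 m p g0 + t * S2 m p g1) \<le> c2 * S2 m p gt"
    using S2_gt c2 by (rule mult_left_mono)
  have B: "c3 * S3 p gt \<le> c3 * ((1-t) * S3 p g0 + t * S3 p g1)"
    using S3_gt c3 by (rule mult_left_mono)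
  have R: "(1-t) * (c1 * S1 m p g0 - c2 * S2 m p g0 + c3 * S3 p g0) + t * (c1 * S1 m p g1 - c2 * S2 m p g1 + c3 * S3 p g1)
     = c1 * ((1-t) * S1 m p g0 + t * S1 m p g1) - c2 * ((1-t) * S2 m p g0 + t * S2 m p g1) + c3 * ((1-t) * S3 p g0 + t * S3 p g1)"
    by (simp add: algebra_simps)
  show ?thesis
    unfolding Fma_cfg'[OF gt_pos] Fma_cfg'[OF g0] Fma_cfg'[OF g1] c1_def[symmetric] c2_def[symmetric] c3_def[symmetric] R S1_gt
    using A B by linarith
qed

end

lemma d_pow:
  fixes f :: "real \<Rightarrow> real"
  assumes "(f has_real_derivative f') (at 0)" "f 0 > 0"
  shows "((\<lambda>t. f t powr a) has_real_derivative a * f 0 powr (a-1) * f') (at 0)"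
  using DERIV_fun_powr[OF assms, of a] by simp

lemma d_abs_pow:
  fixes f :: "real \<Rightarrow> real"
  assumes d: "(f has_real_derivative f') (at 0)" and nz: "f 0 \<noteq> 0"
  shows "((\<lambda>t. \<bar>f t\<bar> powr a) has_real_derivative a * \<bar>f 0\<bar> powr (a-1) * (sgn (f 0) * f')) (at 0)"
proof -
  define s where "s = sgn (f 0)"
  have "isCont f 0" using d by (rule DERIV_continuous)
  hence lim: "(f \<longlongrightarrow> f 0) (nhds 0)" by (simp add: isCont_def tendsto_at_iff_tendsto_nhds)
  have ev: "eventually (\<lambda>t. \<bar>f t\<bar> = s * f t) (nhds 0)"
  proof (cases "f 0 > 0")
    case True
    have "eventually (\<lambda>t. f t > 0) (nhds 0)" using order_tendstoD(1)[OF lim True] .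
    then show ?thesis by (rule eventually_mono) (use True in \<open>simp add: s_def\<close>)
  next
    case False
    hence n: "f 0 < 0" using nz by simp
    have "eventually (\<lambda>t. f t < 0) (nhds 0)" using order_tendstoD(2)[OF lim n] .
    then show ?thesis by (rule eventually_mono) (use n in \<open>simp add: s_def\<close>)
  qed
  have ds: "((\<lambda>t. s * f t) has_real_derivative s * f') (at 0)" using d by (rule DERIV_cmult)
  have pos: "s * f 0 > 0" using nz unfolding s_def by (cases "f 0 > 0") auto
  have "s * f 0 = \<bar>f 0\<bar>" unfolding s_def by (simp add: abs_sgn)
  hence "((\<lambda>t. (s * f t) powr a) has_real_derivative a * \<bar>f 0\<bar> powr (a-1) * (s * f')) (at 0)"
    using d_pow[OF ds pos, of a] by simp
  moreover have ev2: "eventually (\<lambda>t. \<bar>f t\<bar> powr a = (s * f t) powr a) (nhds 0)"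
    using ev by (rule eventually_mono) simp
  ultimately show ?thesis unfolding s_def[symmetric]
    using DERIV_cong_ev[OF refl ev2 refl] by simp
qed

definition Lf :: "real \<Rightarrow> real \<Rightarrow> real \<Rightarrow> nat \<Rightarrow> (nat \<Rightarrow> real) \<Rightarrow> (nat \<Rightarrow> real) \<Rightarrow> real" where
  "Lf m chi alpha p X v =
     (\<Sum>i<p-1. (1/(m-1) * ((1-m) * (X (Suc i) - X i) powr (1-m-1))) * (v (Suc i) - v i))
   + (\<Sum>i<p. \<Sum>j\<in>{..<p}-{i}. (- (chi/(m-1)) * ((1-m) * \<bar>X i - X j\<bar> powr (1-m-1) * sgn (X i - X j))) * (v i - v j))
   + (\<Sum>i<p. (alpha * X i) * v i)"

lemma Fma_deriv:
  fixes x :: "real \<Rightarrow> nat \<Rightarrow> real"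
  assumes inc: "\<forall>i. Suc i < p \<longrightarrow> X i < X (Suc i)"
    and x0: "\<forall>i<p. x 0 i = X i"
    and dx: "\<forall>i<p. ((\<lambda>t. x t i) has_real_derivative v i) (at 0)"
  shows "((\<lambda>t. Fma m chi alpha p (x t)) has_real_derivative Lf m chi alpha p X v) (at 0)"
proof -
  have mono: "\<And>i j. i < j \<Longrightarrow> j < p \<Longrightarrow> X i < X j"
  proof -
    fix i j :: nat assume "i < j" "j < p"
    then show "X i < X j"
    proof (induction j)
      case 0 then show ?case by simp
    next
      case (Suc j)
      show ?case
      proof (cases "i = j")
        case True then show ?thesis using inc Suc by simp
      next
        case False
        hence "X i < X j" using Suc by simp
        also have "X j < X (Suc j)" using inc Suc by simp
        finally show ?thesis .
      qed
    qed
  qed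
  have neq: "\<And>i j. i < p \<Longrightarrow> j < p \<Longrightarrow> i \<noteq> j \<Longrightarrow> X i - X j \<noteq> 0"
    using mono by (metis less_irrefl linorder_neqE_nat right_minus_eq)
  define T1 where "T1 = (\<lambda>t. \<Sum>i<p-1. (x t (Suc i) - x t i) powr (1-m))"
  define T2 where "T2 = (\<lambda>t. \<Sum>i<p. \<Sum>j\<in>{..<p}-{i}. \<bar>x t i - x t j\<bar> powr (1-m))"
  define T3 where "T3 = (\<lambda>t. \<Sum>i<p. (x t i)^2)"
  have D1: "(T1 has_real_derivative (\<Sum>i<p-1. (1-m) * (X (Suc i) - X i) powr (1-m-1) * (v (Suc i) - v i))) (at 0)"
    unfolding T1_def
  proof (rule DERIV_sum)
    fix i assume "i \<in> {..<p-1}"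
    hence i: "Suc i < p" "i < p" by auto
    have d: "((\<lambda>t. x t (Suc i) - x t i) has_real_derivative v (Suc i) - v i) (at 0)"
      using dx i by (intro DERIV_diff) auto
    have "x 0 (Suc i) - x 0 i > 0" using x0 inc i by simp
    from d_pow[OF d this, of "1-m"] show "((\<lambda>t. (x t (Suc i) - x t i) powr (1-m)) has_real_derivative
       (1-m) * (X (Suc i) - X i) powr (1-m-1) * (v (Suc i) - v i)) (at 0)"
      using x0 i by simp
  qed
  have D2: "(T2 has_real_derivative (\<Sum>i<p. \<Sum>j\<in>{..<p}-{i}. (1-m) * \<bar>X i - X j\<bar> powr (1-m-1) * (sgn (X i - X j) * (v i - v j)))) (at 0)"
    unfolding T2_def
  proof (rule DERIV_sum, rule DERIV_sum)
    fix i j assume i: "i \<in> {..<p}" and j: "j \<in> {..<p}-{i}"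
    have d: "((\<lambda>t. x t i - x t j) has_real_derivative v i - v j) (at 0)"
      using dx i j by (intro DERIV_diff) auto
    have "x 0 i - x 0 j \<noteq> 0" using x0 neq i j by auto
    from d_abs_pow[OF d this, of "1-m"] show "((\<lambda>t. \<bar>x t i - x t j\<bar> powr (1-m)) has_real_derivative
       (1-m) * \<bar>X i - X j\<bar> powr (1-m-1) * (sgn (X i - X j) * (v i - v j))) (at 0)"
      using x0 i j by simp
  qed
  have D3: "(T3 has_real_derivative (\<Sum>i<p. 2 * X i * v i)) (at 0)"
    unfolding T3_def
  proof (rule DERIV_sum)
    fix i assume i: "i \<in> {..<p}"
    have eq: "2 * X i * v i = of_nat 2 * (v i * x 0 i ^ (2 - Suc 0))" using x0 i by simp
    show "((\<lambda>t. (x t i)^2) has_real_derivative 2 * X i * v i) (at 0)" unfolding eq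
      using i dx by (intro DERIV_power) auto
  qed
  have F: "(\<lambda>t. Fma m chi alpha p (x t)) = (\<lambda>t. 1/(m-1) * T1 t - chi/(m-1) * T2 t + alpha * T3 t / 2)"
    unfolding Fma_def T1_def T2_def T3_def by simp
  have D: "((\<lambda>t. 1/(m-1) * T1 t - chi/(m-1) * T2 t + alpha * T3 t / 2) has_real_derivative
     1/(m-1) * (\<Sum>i<p-1. (1-m) * (X (Suc i) - X i) powr (1-m-1) * (v (Suc i) - v i))
     - chi/(m-1) * (\<Sum>i<p. \<Sum>j\<in>{..<p}-{i}. (1-m) * \<bar>X i - X j\<bar> powr (1-m-1) * (sgn (X i - X j) * (v i - v j)))
     + alpha * (\<Sum>i<p. 2 * X i * v i) / 2) (at 0)"
    by (intro DERIV_add DERIV_diff DERIV_cmult DERIV_cdivide D1 D2 D3)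
  have L: "1/(m-1) * (\<Sum>i<p-1. (1-m) * (X (Suc i) - X i) powr (1-m-1) * (v (Suc i) - v i))
     - chi/(m-1) * (\<Sum>i<p. \<Sum>j\<in>{..<p}-{i}. (1-m) * \<bar>X i - X j\<bar> powr (1-m-1) * (sgn (X i - X j) * (v i - v j)))
     + alpha * (\<Sum>i<p. 2 * X i * v i) / 2 = Lf m chi alpha p X v"
    unfolding Lf_def
    by (simp add: sum_distrib_left sum_negf[symmetric] sum_divide_distrib mult.assoc)
  show ?thesis using D unfolding F L .
qed

lemma lin_repr:
  fixes L :: "(nat \<Rightarrow> real) \<Rightarrow> real"
  assumes add: "\<And>v w. L (\<lambda>i. v i + w i) = L v + L w"
    and smul: "\<And>c v. L (\<lambda>i. c * v i) = c * L v"
    and loc: "\<And>v w. (\<forall>i<p. v i = w i) \<Longrightarrow> L v = L w"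
  shows "L v = (\<Sum>q<p. v q * L (\<lambda>i. if i = q then 1 else 0))"
proof -
  have zero: "L (\<lambda>i. 0) = 0" using smul[of 0 "\<lambda>i. 0"] by simp
  have sumL: "\<And>(S::nat set) (f::nat \<Rightarrow> nat \<Rightarrow> real). finite S \<Longrightarrow> L (\<lambda>i. \<Sum>q\<in>S. f q i) = (\<Sum>q\<in>S. L (f q))"
  proof -
    fix S :: "nat set" and f :: "nat \<Rightarrow> nat \<Rightarrow> real"
    assume "finite S"
    then show "L (\<lambda>i. \<Sum>q\<in>S. f q i) = (\<Sum>q\<in>S. L (f q))"
    proof (induction S rule: finite_induct)
      case empty then show ?case using zero by simp
    next
      case (insert x F)
      have "L (\<lambda>i. \<Sum>q\<in>insert x F. f q i) = L (\<lambda>i. f x i + (\<Sum>q\<in>F. f q i))"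
        using insert by simp
      also have "\<dots> = L (f x) + L (\<lambda>i. \<Sum>q\<in>F. f q i)" using add[of "f x" "\<lambda>i. \<Sum>q\<in>F. f q i"] by simp
      finally show ?case using insert by simp
    qed
  qed
  define w where "w = (\<lambda>i. \<Sum>q<p. v q * (if i = q then 1 else 0))"
  have "\<forall>i<p. v i = w i" unfolding w_def by (simp add: if_distrib cong: if_cong)
  hence "L v = L w" by (rule loc)
  also have "\<dots> = (\<Sum>q<p. L (\<lambda>i. v q * (if i = q then 1 else 0)))"
    unfolding w_def by (rule sumL) simp
  also have "\<dots> = (\<Sum>q<p. v q * L (\<lambda>i. if i = q then 1 else 0))"
    using smul by simp
  finally show ?thesis .
qed

definition "cA m X i = 1/(m-1) * ((1-m) * (X (Suc i) - X i) powr (1-m-1))"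
definition "cB m chi X i j = - (chi/(m-1)) * ((1-m) * \<bar>X i - X j\<bar> powr (1-m-1) * sgn (X i - X j))"
definition "cC alpha X i = alpha * (X i :: real)"

lemma Lf_alt: "Lf m chi alpha p X v = (\<Sum>i<p-1. cA m X i * (v (Suc i) - v i))
   + (\<Sum>i<p. \<Sum>j\<in>{..<p}-{i}. cB m chi X i j * (v i - v j)) + (\<Sum>i<p. cC alpha X i * v i)"
  unfolding Lf_def cA_def cB_def cC_def ..

lemma Lf_add: "Lf m chi alpha p X (\<lambda>i. v i + w i) = Lf m chi alpha p X v + Lf m chi alpha p X w"
proof -
  have e1: "(\<Sum>i<p-1. cA m X i * ((v (Suc i) + w (Suc i)) - (v i + w i))) =
    (\<Sum>i<p-1. cA m X i * (v (Suc i) - v i)) + (\<Sum>i<p-1. cA m X i * (w (Suc i) - w i))"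
    by (simp add: sum.distrib[symmetric] algebra_simps)
  have e2: "(\<Sum>i<p. \<Sum>j\<in>{..<p}-{i}. cB m chi X i j * ((v i + w i) - (v j + w j))) =
    (\<Sum>i<p. \<Sum>j\<in>{..<p}-{i}. cB m chi X i j * (v i - v j)) + (\<Sum>i<p. \<Sum>j\<in>{..<p}-{i}. cB m chi X i j * (w i - w j))"
    by (simp add: sum.distrib[symmetric] algebra_simps)
  have e3: "(\<Sum>i<p. cC alpha X i * (v i + w i)) = (\<Sum>i<p. cC alpha X i * v i) + (\<Sum>i<p. cC alpha X i * w i)"
    by (simp add: sum.distrib[symmetric] algebra_simps)
  show ?thesis unfolding Lf_alt e1 e2 e3 by simp
qed

lemma Lf_smul: "Lf m chi alpha p X (\<lambda>i. c * v i) = c * Lf m chi alpha p X v"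
proof -
  have e1: "(\<Sum>i<p-1. cA m X i * (c * v (Suc i) - c * v i)) = c * (\<Sum>i<p-1. cA m X i * (v (Suc i) - v i))"
    by (simp add: sum_distrib_left algebra_simps)
  have e2: "(\<Sum>i<p. \<Sum>j\<in>{..<p}-{i}. cB m chi X i j * (c * v i - c * v j)) =
    c * (\<Sum>i<p. \<Sum>j\<in>{..<p}-{i}. cB m chi X i j * (v i - v j))"
    by (simp add: sum_distrib_left algebra_simps)
  have e3: "(\<Sum>i<p. cC alpha X i * (c * v i)) = c * (\<Sum>i<p. cC alpha X i * v i)"
    by (simp add: sum_distrib_left algebra_simps)
  show ?thesis unfolding Lf_alt e1 e2 e3 by (simp add: algebra_simps)
qed

lemma Lf_loc:
  assumes H: "\<forall>i<p. v i = w i"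
  shows "Lf m chi alpha p X v = Lf m chi alpha p X w"
proof -
  have e1: "(\<Sum>i<p-1. (1/(m-1) * ((1-m) * (X (Suc i) - X i) powr (1-m-1))) * (v (Suc i) - v i))
      = (\<Sum>i<p-1. (1/(m-1) * ((1-m) * (X (Suc i) - X i) powr (1-m-1))) * (w (Suc i) - w i))"
    using H by (intro sum.cong refl) auto
  have e2: "(\<Sum>i<p. \<Sum>j\<in>{..<p}-{i}. (- (chi/(m-1)) * ((1-m) * \<bar>X i - X j\<bar> powr (1-m-1) * sgn (X i - X j))) * (v i - v j))
     = (\<Sum>i<p. \<Sum>j\<in>{..<p}-{i}. (- (chi/(m-1)) * ((1-m) * \<bar>X i - X j\<bar> powr (1-m-1) * sgn (X i - X j))) * (w i - w j))"
    using H by (intro sum.cong refl) auto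
  have e3: "(\<Sum>i<p. (alpha * X i) * v i) = (\<Sum>i<p. (alpha * X i) * w i)"
    using H by (intro sum.cong refl) auto
  show ?thesis unfolding Lf_def e1 e2 e3 ..
qed

lemma Lf_repr: "Lf m chi alpha p X v = (\<Sum>q<p. v q * Lf m chi alpha p X (\<lambda>i. if i = q then 1 else 0))"
  by (rule lin_repr[of "Lf m chi alpha p X"]) (auto intro: Lf_add Lf_smul Lf_loc)

lemma Rp_inc: "X \<in> Rp p \<Longrightarrow> \<forall>i. Suc i < p \<longrightarrow> X i < X (Suc i)"
  unfolding Rp_def by auto

lemma crit_L:
  assumes c: "critical_point m chi alpha p X" and q: "q < p"
  shows "Lf m chi alpha p X (\<lambda>i. if i = q then 1 else 0) = 0"
proof -
  have X: "X \<in> Rp p" and d0: "((\<lambda>t. Fma m chi alpha p (X(q := X q + t))) has_real_derivative 0) (at 0)"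
    using c q unfolding critical_point_def by auto
  define x where "x = (\<lambda>t. X(q := X q + t))"
  have dx: "\<forall>i<p. ((\<lambda>t. x t i) has_real_derivative (if i = q then 1 else 0)) (at 0)"
  proof (intro allI impI)
    fix i assume "i < p"
    show "((\<lambda>t. x t i) has_real_derivative (if i = q then 1 else 0)) (at 0)"
    proof (cases "i = q")
      case True
      then show ?thesis unfolding x_def by (auto intro!: derivative_eq_intros)
    next
      case False
      then show ?thesis unfolding x_def by (auto intro!: derivative_eq_intros)
    qed
  qed
  have "((\<lambda>t. Fma m chi alpha p (x t)) has_real_derivative Lf m chi alpha p X (\<lambda>i. if i = q then 1 else 0)) (at 0)"
    using Rp_inc[OF X] dx by (intro Fma_deriv) (auto simp: x_def)
  with d0 show ?thesis unfolding x_def using DERIV_unique by blast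
qed

lemma crit_Lf_zero: "critical_point m chi alpha p X \<Longrightarrow> Lf m chi alpha p X v = 0"
  using Lf_repr[of m chi alpha p X v] crit_L by simp

lemma deriv_chord:
  fixes G :: "real \<Rightarrow> real"
  assumes d: "(G has_real_derivative 0) (at 0)"
    and c: "\<forall>t. 0 < t \<and> t \<le> 1 \<longrightarrow> G t \<le> (1-t) * G 0 + t * G 1"
  shows "G 0 \<le> G 1"
proof -
  have "(G has_real_derivative 0) (at 0 within {0<..})" using d by (rule has_field_derivative_at_within)
  hence lim: "((\<lambda>y. (G y - G 0) / (y - 0)) \<longlongrightarrow> 0) (at_right 0)"
    by (simp add: has_field_derivative_iff)
  have ev: "eventually (\<lambda>y. (G y - G 0) / (y - 0) \<le> G 1 - G 0) (at_right 0)"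
  proof (rule eventually_at_rightI[of 0 1])
    fix y :: real assume "y \<in> {0<..<1}"
    hence y: "0 < y" "y < 1" by auto
    have "G y - G 0 \<le> y * (G 1 - G 0)" using c y by (auto simp: algebra_simps)
    thus "(G y - G 0) / (y - 0) \<le> G 1 - G 0" using y by (simp add: divide_le_eq mult.commute)
  qed simp
  have "0 \<le> G 1 - G 0" by (rule tendsto_upperbound[OF lim ev]) simp
  thus ?thesis by simp
qed

definition "dM k a b = (-1/k) * (a powr (-k)) powr (-1/k - 1) * (b powr (-k) - a powr (-k))"

lemma Mt_deriv:
  fixes k a b :: real
  assumes k: "k > 0" and a: "a > 0" and b: "b > 0"
  shows "((\<lambda>t. Mt k t a b) has_real_derivative dM k a b) (at 0)"
proof -
  have d: "((\<lambda>t. (1-t) * a powr (-k) + t * b powr (-k)) has_real_derivative (b powr (-k) - a powr (-k))) (at 0)"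
    by (auto intro!: derivative_eq_intros)
  have "(\<lambda>t. (1-t) * a powr (-k) + t * b powr (-k)) 0 > 0" using a by simp
  from d_pow[OF d this, of "-1/k"] show ?thesis unfolding Mt_def dM_def by simp
qed

lemma part1:
  assumes m: "m > 1" and chi: "chi \<ge> 0" and al: "alpha \<ge> 0" and p: "p \<ge> 1"
    and c: "critical_point m chi alpha p X" and Y: "Y \<in> Rp p"
  shows "Fma m chi alpha p X \<le> Fma m chi alpha p Y"
proof -
  have X: "X \<in> Rp p" using c unfolding critical_point_def by simp
  define g0 where "g0 = gap X"
  define g1 where "g1 = gap Y"
  have g0p: "\<forall>l. Suc l < p \<longrightarrow> g0 l > 0" unfolding g0_def using gap_pos[OF X] by auto
  have g1p: "\<forall>l. Suc l < p \<longrightarrow> g1 l > 0" unfolding g1_def using gap_pos[OF Y] by auto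
  have k: "m - 1 > 0" using m by simp
  define x where "x = (\<lambda>t. cfg p (\<lambda>l. Mt (m-1) t (g0 l) (g1 l)))"
  define G where "G = (\<lambda>t. Fma m chi alpha p (x t))"
  have x0: "x 0 = X"
  proof -
    have "x 0 = cfg p g0" unfolding x_def using g0p Mt_zero[OF k] by (intro cfg_cong) auto
    thus ?thesis unfolding g0_def cfg_gap[OF X] .
  qed
  have x1: "x 1 = Y"
  proof -
    have "x 1 = cfg p g1" unfolding x_def using g1p Mt_one[OF k] by (intro cfg_cong) auto
    thus ?thesis unfolding g1_def cfg_gap[OF Y] .
  qed
  have ch: "\<forall>t. 0 < t \<and> t \<le> 1 \<longrightarrow> G t \<le> (1-t) * G 0 + t * G 1"
  proof (intro allI impI)
    fix t :: real assume t: "0 < t \<and> t \<le> 1"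
    have "Fma m chi alpha p (cfg p (gt m t g0 g1)) \<le> (1-t) * Fma m chi alpha p (cfg p g0) + t * Fma m chi alpha p (cfg p g1)"
      using chord[OF m p g0p g1p _ _ chi al] t by simp
    moreover have "gt m t g0 g1 = (\<lambda>l. Mt (m-1) t (g0 l) (g1 l))" using gt_def[OF m p g0p g1p] t by simp
    ultimately show "G t \<le> (1-t) * G 0 + t * G 1"
      unfolding G_def x0 x1 unfolding x_def g0_def g1_def cfg_gap[OF X] cfg_gap[OF Y] by simp
  qed
  define d where "d = (\<lambda>l. dM (m-1) (g0 l) (g1 l))"
  define v where "v = (\<lambda>i. (\<Sum>l<i. d l) - (\<Sum>q<p. \<Sum>l<q. d l) / real p)"
  have dx: "\<forall>i<p. ((\<lambda>t. x t i) has_real_derivative v i) (at 0)"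
  proof (intro allI impI)
    fix i assume i: "i < p"
    have fx: "(\<lambda>t. x t i) = (\<lambda>t. (\<Sum>l<i. Mt (m-1) t (g0 l) (g1 l)) - (\<Sum>q<p. \<Sum>l<q. Mt (m-1) t (g0 l) (g1 l)) / real p)"
      unfolding x_def cfg_def using i by simp
    have dl: "\<And>l. Suc l < p \<Longrightarrow> ((\<lambda>t. Mt (m-1) t (g0 l) (g1 l)) has_real_derivative d l) (at 0)"
      unfolding d_def using g0p g1p by (intro Mt_deriv[OF k]) auto
    show "((\<lambda>t. x t i) has_real_derivative v i) (at 0)" unfolding fx v_def
      using i by (intro DERIV_diff DERIV_cdivide DERIV_sum dl) auto
  qed
  have "(G has_real_derivative Lf m chi alpha p X v) (at 0)"
    unfolding G_def using Rp_inc[OF X] dx x0 by (intro Fma_deriv) auto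
  hence "(G has_real_derivative 0) (at 0)" using crit_Lf_zero[OF c] by simp
  from deriv_chord[OF this ch] show ?thesis unfolding G_def x0 x1 .
qed

definition Tu :: "real \<Rightarrow> (nat \<Rightarrow> real) \<Rightarrow> nat \<Rightarrow> nat \<Rightarrow> real" where
  "Tu k u i j = (if (\<forall>l\<in>{i..<j}. 0 < u l) then (\<Sum>l\<in>{i..<j}. u l powr (-1/k)) powr (-k) else 0)"
definition Pu :: "nat \<Rightarrow> (nat \<Rightarrow> real) \<Rightarrow> real" where
  "Pu n u = (\<Sum>l<n. u l)"
definition Nu :: "real \<Rightarrow> nat \<Rightarrow> (nat \<Rightarrow> real) \<Rightarrow> real" where
  "Nu k p u = (\<Sum>i<p. \<Sum>j\<in>{i<..<p}. Tu k u i j)"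

lemma Tu_nonneg: "Tu k u i j \<ge> 0"
  unfolding Tu_def by simp

lemma sym_sum:
  fixes f :: "nat \<Rightarrow> nat \<Rightarrow> real"
  assumes sym: "\<And>i j. f i j = f j i"
  shows "(\<Sum>i<p. \<Sum>j\<in>{..<p}-{i}. f i j) = 2 * (\<Sum>i<p. \<Sum>j\<in>{i<..<p}. f i j)"
proof -
  have split: "\<And>i. i < p \<Longrightarrow> (\<Sum>j\<in>{..<p}-{i}. f i j) = (\<Sum>j\<in>{..<i}. f i j) + (\<Sum>j\<in>{i<..<p}. f i j)"
  proof -
    fix i assume i: "i < p"
    have "{..<p}-{i} = {..<i} \<union> {i<..<p}" using i by auto
    moreover have "{..<i} \<inter> {i<..<p} = {}" by auto
    ultimately show "(\<Sum>j\<in>{..<p}-{i}. f i j) = (\<Sum>j\<in>{..<i}. f i j) + (\<Sum>j\<in>{i<..<p}. f i j)"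
      by (simp add: sum.union_disjoint)
  qed
  have sw: "(\<Sum>i<p. \<Sum>j\<in>{..<i}. f i j) = (\<Sum>j<p. \<Sum>i\<in>{j<..<p}. f i j)"
  proof -
    have "(\<Sum>i<p. \<Sum>j\<in>{..<i}. f i j) = (\<Sum>i\<in>{..<p}. sum (f i) {j \<in> {..<p}. j < i})"
      by (intro sum.cong refl) (auto intro: sum.cong)
    also have "\<dots> = (\<Sum>j\<in>{..<p}. \<Sum>i | i \<in> {..<p} \<and> j < i. f i j)"
      by (rule sum.swap_restrict) auto
    also have "\<dots> = (\<Sum>j<p. \<Sum>i\<in>{j<..<p}. f i j)"
      by (intro sum.cong refl) (auto intro: sum.cong)
    finally show ?thesis .
  qed
  have "(\<Sum>i<p. \<Sum>j\<in>{..<p}-{i}. f i j) = (\<Sum>i<p. \<Sum>j\<in>{..<i}. f i j) + (\<Sum>i<p. \<Sum>j\<in>{i<..<p}. f i j)"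
    using split by (simp add: sum.distrib[symmetric])
  also have "(\<Sum>i<p. \<Sum>j\<in>{..<i}. f i j) = (\<Sum>i<p. \<Sum>j\<in>{i<..<p}. f i j)"
    unfolding sw using sym by simp
  finally show ?thesis by simp
qed

lemma ratio_u:
  assumes m: "m > 1" and u: "\<forall>l. Suc l < p \<longrightarrow> u l > 0"
  shows "ratio m p (cfg p (\<lambda>l. u l powr (-1/(m-1)))) = 2 * Nu (m-1) p u / Pu (p-1) u"
proof -
  define g where "g = (\<lambda>l. u l powr (-1/(m-1)))"
  have gp: "\<forall>l. Suc l < p \<longrightarrow> g l > 0" unfolding g_def using u by auto
  have gk: "\<And>l. Suc l < p \<Longrightarrow> g l powr (1-m) = u l"
  proof -
    fix l assume "Suc l < p"
    hence ul: "u l > 0" using u by simp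
    have "g l powr (1-m) = u l powr ((-1/(m-1)) * (1-m))" unfolding g_def by (rule powr_powr)
    also have "(-1/(m-1)) * (1-m) = 1" using m by (simp add: field_simps)
    finally show "g l powr (1-m) = u l" using ul by simp
  qed
  have s1: "S1 m p g = Pu (p-1) u" unfolding S1_def Pu_def using gk by (intro sum.cong) auto
  have tu: "\<And>i j. i < j \<Longrightarrow> j < p \<Longrightarrow> Dd g i j powr (1-m) = Tu (m-1) u i j"
  proof -
    fix i j assume ij: "i < j" "j < p"
    have "\<forall>l\<in>{i..<j}. 0 < u l" using u ij by auto
    moreover have "Dd g i j = (\<Sum>l\<in>{i..<j}. u l powr (-1/(m-1)))" unfolding Dd_def g_def using ij by simp
    ultimately show "Dd g i j powr (1-m) = Tu (m-1) u i j" unfolding Tu_def by simp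
  qed
  have "S2 m p g = 2 * (\<Sum>i<p. \<Sum>j\<in>{i<..<p}. Dd g i j powr (1-m))"
    unfolding S2_def by (rule sym_sum) (simp add: Dd_sym)
  also have "(\<Sum>i<p. \<Sum>j\<in>{i<..<p}. Dd g i j powr (1-m)) = Nu (m-1) p u"
    unfolding Nu_def using tu by (intro sum.cong refl) auto
  finally have s2: "S2 m p g = 2 * Nu (m-1) p u" .
  have r: "ratio m p (cfg p g) = S2 m p g / S1 m p g" using ratio_cfg[OF gp] .
  show ?thesis using r s1 s2 unfolding g_def by simp
qed

lemma Tu_le:
  assumes k: "k > 0" and l: "i \<le> l" "l < j" and pos: "\<forall>q\<in>{i..<j}. 0 < u q"
  shows "Tu k u i j \<le> u l"
proof -
  have ul: "u l > 0" using pos l by auto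
  have le: "u l powr (-1/k) \<le> (\<Sum>q\<in>{i..<j}. u q powr (-1/k))"
    using l by (intro member_le_sum) auto
  have "(\<Sum>q\<in>{i..<j}. u q powr (-1/k)) powr (-k) \<le> (u l powr (-1/k)) powr (-k)"
    using le ul k by (intro powr_mono2') auto
  also have "(u l powr (-1/k)) powr (-k) = u l powr ((-1/k) * (-k))" by (rule powr_powr)
  also have "(-1/k) * (-k) = 1" using k by simp
  finally show ?thesis unfolding Tu_def using pos ul by simp
qed

lemma Nu_bound:
  assumes k: "k > 0" and u: "\<forall>l<n. u l \<ge> 0"
    and L: "\<And>i j. i < j \<Longrightarrow> j \<le> n \<Longrightarrow> Tu k u i j \<noteq> 0 \<Longrightarrow> j \<le> i + Lam"
  shows "Nu k (Suc n) u \<le> real Lam * Pu n u"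
proof -
  have row: "\<And>i. i < n \<Longrightarrow> (\<Sum>j\<in>{i<..<Suc n}. Tu k u i j) \<le> real Lam * u i"
  proof -
    fix i assume i: "i < n"
    have "(\<Sum>j\<in>{i<..<Suc n}. Tu k u i j) \<le> (\<Sum>j\<in>{i<..<Suc n}. if j \<le> i + Lam then u i else 0)"
    proof (rule sum_mono)
      fix j assume j: "j \<in> {i<..<Suc n}"
      show "Tu k u i j \<le> (if j \<le> i + Lam then u i else 0)"
      proof (cases "Tu k u i j = 0")
        case True then show ?thesis using u i by simp
      next
        case False
        hence pos: "\<forall>q\<in>{i..<j}. 0 < u q" unfolding Tu_def by (auto split: if_splits)
        have "j \<le> i + Lam" using L[of i j] j False by simp
        moreover have "Tu k u i j \<le> u i" using Tu_le[OF k _ _ pos, of i] j by simp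
        ultimately show ?thesis by simp
      qed
    qed
    also have "\<dots> = real (card {j\<in>{i<..<Suc n}. j \<le> i + Lam}) * u i"
      using sum.inter_filter[of "{i<..<Suc n}" "\<lambda>j. u i" "\<lambda>j. j \<le> i + Lam"] by simp
    also have "\<dots> \<le> real Lam * u i"
    proof (rule mult_right_mono)
      have "{j\<in>{i<..<Suc n}. j \<le> i + Lam} \<subseteq> {i<..i+Lam}" by auto
      hence "card {j\<in>{i<..<Suc n}. j \<le> i + Lam} \<le> card {i<..i+Lam}" by (intro card_mono) auto
      thus "real (card {j\<in>{i<..<Suc n}. j \<le> i + Lam}) \<le> real Lam" by simp
    qed (use u i in auto)
    finally show "(\<Sum>j\<in>{i<..<Suc n}. Tu k u i j) \<le> real Lam * u i" .
  qed
  have e: "{n<..<Suc n} = {}" by auto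
  have "Nu k (Suc n) u = (\<Sum>i<n. \<Sum>j\<in>{i<..<Suc n}. Tu k u i j)"
    unfolding Nu_def by (simp add: e)
  also have "\<dots> \<le> (\<Sum>i<n. real Lam * u i)" using row by (intro sum_mono) auto
  also have "\<dots> = real Lam * Pu n u" unfolding Pu_def by (simp add: sum_distrib_left)
  finally show ?thesis .
qed

lemma Tu_scale:
  assumes k: "k > 0" and c: "c > 0"
  shows "Tu k (\<lambda>l. c * u l) i j = c * Tu k u i j"
proof (cases "\<forall>l\<in>{i..<j}. 0 < u l")
  case True
  have pos: "\<forall>l\<in>{i..<j}. 0 < c * u l" using True c by simp
  have "(\<Sum>l\<in>{i..<j}. (c * u l) powr (-1/k)) = c powr (-1/k) * (\<Sum>l\<in>{i..<j}. u l powr (-1/k))"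
    unfolding sum_distrib_left using True c by (intro sum.cong refl) (simp add: powr_mult)
  hence "(\<Sum>l\<in>{i..<j}. (c * u l) powr (-1/k)) powr (-k) = (c powr (-1/k)) powr (-k) * (\<Sum>l\<in>{i..<j}. u l powr (-1/k)) powr (-k)"
    using c by (simp add: powr_mult sum_nonneg)
  also have "(c powr (-1/k)) powr (-k) = c"
    using c k by (simp add: powr_powr)
  finally show ?thesis unfolding Tu_def using True pos by simp
next
  case False
  hence n1: "\<not> (\<forall>l\<in>{i..<j}. 0 < c * u l)" using c by (simp add: zero_less_mult_iff)
  show ?thesis unfolding Tu_def by (simp only: if_not_P[OF n1] if_not_P[OF False] mult_zero_right)
qed

lemma Nu_scale: "k > 0 \<Longrightarrow> c > 0 \<Longrightarrow> Nu k p (\<lambda>l. c * u l) = c * Nu k p u"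
  unfolding Nu_def by (simp add: Tu_scale sum_distrib_left)

lemma Pu_scale: "Pu n (\<lambda>l. c * u l) = c * Pu n u"
  unfolding Pu_def by (simp add: sum_distrib_left)

lemma Pu_upd:
  assumes l: "l < n" and wl: "w l = 0"
  shows "Pu n (w(l := e)) = Pu n w + e"
proof -
  have "Pu n (w(l := e)) = e + (\<Sum>q\<in>{..<n}-{l}. (w(l := e)) q)"
    unfolding Pu_def using l by (subst sum.remove[of _ l]) auto
  also have "(\<Sum>q\<in>{..<n}-{l}. (w(l := e)) q) = (\<Sum>q\<in>{..<n}-{l}. w q)" by (intro sum.cong) auto
  also have "\<dots> = Pu n w" unfolding Pu_def using l wl by (subst (2) sum.remove[of _ l]) auto
  finally show ?thesis by linarith
qed

lemma Tu_upd_eq: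
  assumes k: "k > 0" and e: "e > 0" and il: "i \<le> l" "l < j" and pos: "\<forall>q\<in>{i..<j}. q \<noteq> l \<longrightarrow> w q > 0"
  shows "Tu k (w(l := e)) i j = e * (1 + (\<Sum>q\<in>{i..<j}-{l}. w q powr (-1/k)) * e powr (1/k)) powr (-k)"
proof -
  define B where "B = (\<Sum>q\<in>{i..<j}-{l}. w q powr (-1/k))"
  have B: "B \<ge> 0" unfolding B_def by (intro sum_nonneg) auto
  have allpos: "\<forall>q\<in>{i..<j}. 0 < (w(l := e)) q" using pos e by auto
  have "(\<Sum>q\<in>{i..<j}. (w(l := e)) q powr (-1/k)) = e powr (-1/k) + (\<Sum>q\<in>{i..<j}-{l}. (w(l := e)) q powr (-1/k))"
    using il by (subst sum.remove[of _ l]) auto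
  also have "(\<Sum>q\<in>{i..<j}-{l}. (w(l := e)) q powr (-1/k)) = B" unfolding B_def by (intro sum.cong) auto
  also have "e powr (-1/k) + B = e powr (-1/k) * (1 + B * e powr (1/k))"
  proof -
    have "e powr (-1/k) * e powr (1/k) = 1" using e by (simp add: powr_add[symmetric])
    thus ?thesis by (simp add: algebra_simps)
  qed
  finally have S: "(\<Sum>q\<in>{i..<j}. (w(l := e)) q powr (-1/k)) = e powr (-1/k) * (1 + B * e powr (1/k))" .
  have pos1: "1 + B * e powr (1/k) > 0" using B e by (simp add: add_pos_nonneg)
  have "(e powr (-1/k) * (1 + B * e powr (1/k))) powr (-k) = (e powr (-1/k)) powr (-k) * (1 + B * e powr (1/k)) powr (-k)"
    using pos1 e by (simp add: powr_mult)
  also have "(e powr (-1/k)) powr (-k) = e" using e k by (simp add: powr_powr)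
  finally show ?thesis unfolding Tu_def using allpos S B_def by simp
qed

lemma lim_h:
  fixes k B :: real
  assumes k: "k > 0" and B: "B \<ge> 0"
  shows "((\<lambda>e. (1 + B * e powr (1/k)) powr (-k)) \<longlongrightarrow> 1) (at_right 0)"
proof -
  have z: "((\<lambda>e::real. e powr (1/k)) \<longlongrightarrow> 0) (at_right 0)"
    using k by (intro tendsto_zero_powrI[where b="1/k"] tendsto_ident_at tendsto_const) (auto simp: eventually_at_right_less eventually_at_filter)
  have "((\<lambda>e. 1 + B * e powr (1/k)) \<longlongrightarrow> 1 + B * 0) (at_right 0)"
    by (intro tendsto_intros z)
  hence "((\<lambda>e. (1 + B * e powr (1/k)) powr (-k)) \<longlongrightarrow> (1 + B * 0) powr (-k)) (at_right 0)"
    by (intro tendsto_powr tendsto_const) auto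
  thus ?thesis by simp
qed

lemma gain:
  assumes k: "k > 0" and w0: "\<forall>q<n. w q \<ge> 0" and l: "l < n" and wl: "w l = 0" and P: "Pu n w > 0"
    and NB: "Nu k (Suc n) w \<le> real Lam * Pu n w"
    and A: "A \<subseteq> Sigma {..<Suc n} (\<lambda>i. {i<..<Suc n})"
    and Ap: "\<forall>(i,j)\<in>A. i \<le> l \<and> l < j \<and> (\<forall>q\<in>{i..<j}. q \<noteq> l \<longrightarrow> w q > 0)"
    and cA: "card A \<ge> Lam + 1"
  shows "\<exists>e>0. Nu k (Suc n) w / Pu n w \<le> Nu k (Suc n) (w(l := e)) / Pu n (w(l := e))"
proof -
  have fS: "finite (Sigma {..<Suc n} (\<lambda>i. {i<..<Suc n}))" by auto
  have fA: "finite A" using A fS by (rule finite_subset)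
  define B where "B = (\<lambda>ij. (\<Sum>q\<in>{fst ij..<snd ij}-{l}. w q powr (-1/k)))"
  define c where "c = real Lam / (real Lam + 1)"
  have c1: "c < 1" unfolding c_def by simp
  have ev1: "\<forall>ij\<in>A. eventually (\<lambda>e. (1 + B ij * e powr (1/k)) powr (-k) > c) (at_right 0)"
  proof
    fix ij assume "ij \<in> A"
    have "B ij \<ge> 0" unfolding B_def by (intro sum_nonneg) auto
    from order_tendstoD(1)[OF lim_h[OF k this] c1] show "eventually (\<lambda>e. (1 + B ij * e powr (1/k)) powr (-k) > c) (at_right 0)" .
  qed
  have "eventually (\<lambda>e. \<forall>ij\<in>A. (1 + B ij * e powr (1/k)) powr (-k) > c) (at_right 0)"
    using eventually_ball_finite[OF fA ev1] .
  moreover have "eventually (\<lambda>e::real. e > 0) (at_right 0)" by (simp add: eventually_at_right_less)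
  ultimately have "eventually (\<lambda>e. e > 0 \<and> (\<forall>ij\<in>A. (1 + B ij * e powr (1/k)) powr (-k) > c)) (at_right 0)"
    by (rule eventually_conj[OF _ _, rotated]) 
  then obtain e where e: "e > 0" and he: "\<forall>ij\<in>A. (1 + B ij * e powr (1/k)) powr (-k) > c"
    using eventually_happens'[OF trivial_limit_at_right_real] by blast
  define w' where "w' = w(l := e)"
  have TA: "\<And>i j. (i,j) \<in> A \<Longrightarrow> Tu k w' i j \<ge> e * c"
  proof -
    fix i j assume ij: "(i,j) \<in> A"
    have h: "i \<le> l" "l < j" "\<forall>q\<in>{i..<j}. q \<noteq> l \<longrightarrow> w q > 0" using Ap ij by auto
    have "Tu k w' i j = e * (1 + B (i,j) * e powr (1/k)) powr (-k)"
      unfolding w'_def B_def using Tu_upd_eq[OF k e h] by simp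
    moreover have "(1 + B (i,j) * e powr (1/k)) powr (-k) > c" using he ij by auto
    ultimately show "Tu k w' i j \<ge> e * c" using e by simp
  qed
  have trm: "\<And>ij. ij \<in> Sigma {..<Suc n} (\<lambda>i. {i<..<Suc n}) \<Longrightarrow>
     Tu k w (fst ij) (snd ij) + (if ij \<in> A then Tu k w' (fst ij) (snd ij) else 0) \<le> Tu k w' (fst ij) (snd ij)"
  proof -
    fix ij assume "ij \<in> Sigma {..<Suc n} (\<lambda>i. {i<..<Suc n})"
    obtain i j where ij: "ij = (i,j)" by force
    show "Tu k w (fst ij) (snd ij) + (if ij \<in> A then Tu k w' (fst ij) (snd ij) else 0) \<le> Tu k w' (fst ij) (snd ij)"
    proof (cases "l \<in> {i..<j}")
      case True
      hence "\<not> (\<forall>q\<in>{i..<j}. 0 < w q)" using wl by (metis less_irrefl)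
      hence "Tu k w i j = 0" unfolding Tu_def by (rule if_not_P)
      then show ?thesis unfolding ij using Tu_nonneg[of k w' i j] by simp
    next
      case False
      hence "ij \<notin> A" using Ap unfolding ij by auto
      moreover have "Tu k w' i j = Tu k w i j"
      proof -
        have "\<forall>q\<in>{i..<j}. w' q = w q" using False unfolding w'_def by auto
        hence "(\<forall>q\<in>{i..<j}. 0 < w' q) = (\<forall>q\<in>{i..<j}. 0 < w q)"
          and "(\<Sum>q\<in>{i..<j}. w' q powr (-1/k)) = (\<Sum>q\<in>{i..<j}. w q powr (-1/k))" by (auto intro: sum.cong)
        thus ?thesis unfolding Tu_def by simp
      qed
      ultimately show ?thesis unfolding ij by simp
    qed
  qed
  have NS: "\<And>u. Nu k (Suc n) u = (\<Sum>ij\<in>Sigma {..<Suc n} (\<lambda>i. {i<..<Suc n}). Tu k u (fst ij) (snd ij))"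
    unfolding Nu_def by (subst sum.Sigma) (auto simp: case_prod_beta simp del: lessThan_Suc sum.lessThan_Suc)
  have "Nu k (Suc n) w + (\<Sum>ij\<in>A. Tu k w' (fst ij) (snd ij)) =
     (\<Sum>ij\<in>Sigma {..<Suc n} (\<lambda>i. {i<..<Suc n}). Tu k w (fst ij) (snd ij) + (if ij \<in> A then Tu k w' (fst ij) (snd ij) else 0))"
  proof -
    have "(\<Sum>ij\<in>A. Tu k w' (fst ij) (snd ij)) = (\<Sum>ij\<in>Sigma {..<Suc n} (\<lambda>i. {i<..<Suc n}) \<inter> A. Tu k w' (fst ij) (snd ij))"
    proof -
      have "Sigma {..<Suc n} (\<lambda>i. {i<..<Suc n}) \<inter> A = A" using A by blast
      thus ?thesis by simp
    qed
    also have "\<dots> = (\<Sum>ij\<in>Sigma {..<Suc n} (\<lambda>i. {i<..<Suc n}). if ij \<in> A then Tu k w' (fst ij) (snd ij) else 0)"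
      using fS by (rule sum.inter_restrict)
    finally show ?thesis unfolding NS by (simp add: sum.distrib)
  qed
  also have "\<dots> \<le> Nu k (Suc n) w'" unfolding NS[of w'] by (intro sum_mono trm)
  finally have N1: "Nu k (Suc n) w + (\<Sum>ij\<in>A. Tu k w' (fst ij) (snd ij)) \<le> Nu k (Suc n) w'" .
  have "(\<Sum>ij\<in>A. Tu k w' (fst ij) (snd ij)) \<ge> (\<Sum>ij\<in>A. e * c)"
    using TA by (intro sum_mono) auto
  moreover have "(\<Sum>ij\<in>A. e * c) = real (card A) * (e * c)" by simp
  moreover have "real (card A) * (e * c) \<ge> (real Lam + 1) * (e * c)"
    using cA e by (intro mult_right_mono) (auto simp: c_def)
  moreover have "(real Lam + 1) * (e * c) = real Lam * e" unfolding c_def by (simp add: field_simps)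
  ultimately have G: "(\<Sum>ij\<in>A. Tu k w' (fst ij) (snd ij)) \<ge> real Lam * e" by linarith
  have P': "Pu n w' = Pu n w + e" unfolding w'_def by (rule Pu_upd[of l n w, OF l wl])
  define N where "N = Nu k (Suc n) w"
  define r where "r = N / Pu n w"
  have NP: "r \<le> real Lam" using NB P unfolding N_def r_def by (simp add: divide_le_eq)
  have rP: "r * Pu n w = N" unfolding r_def using P by simp
  have "r * (Pu n w + e) = N + r * e" using rP by (simp add: distrib_left)
  also have "\<dots> \<le> N + real Lam * e"
  proof -
    have "r * e \<le> real Lam * e" using NP e by (intro mult_right_mono) auto
    thus ?thesis by linarith
  qed
  also have "\<dots> \<le> Nu k (Suc n) w'" using N1 G unfolding N_def by linarith
  finally have r1: "r * (Pu n w + e) \<le> Nu k (Suc n) w'" .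
  have pe: "0 < Pu n w + e" using P e by simp
  have "r \<le> Nu k (Suc n) w' / (Pu n w + e)" using r1 pos_le_divide_eq[OF pe] by blast
  hence "N / Pu n w \<le> Nu k (Suc n) w' / Pu n w'" unfolding r_def P' .
  hence fin: "Nu k (Suc n) w / Pu n w \<le> Nu k (Suc n) (w(l := e)) / Pu n (w(l := e))"
    unfolding N_def w'_def .
  show ?thesis by (rule exI[of _ e]) (use e fin in simp)
qed

lemma fill_step:
  assumes k: "k > 0" and w0: "\<forall>q<n. w q \<ge> 0" and P: "Pu n w > 0" and Z: "l0 < n" "w l0 = 0"
  shows "\<exists>l<n. w l = 0 \<and> (\<exists>e>0. Nu k (Suc n) w / Pu n w \<le> Nu k (Suc n) (w(l := e)) / Pu n (w(l := e)))"
proof -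
  define R where "R = {L. \<exists>i. i + L \<le> n \<and> (\<forall>q\<in>{i..<i+L}. 0 < w q)}"
  have fR: "finite R" by (rule finite_subset[of _ "{..n}"]) (auto simp: R_def)
  have R0: "0 \<in> R" unfolding R_def by auto
  define Lam where "Lam = Max R"
  have LR: "Lam \<in> R" unfolding Lam_def using fR R0 by (intro Max_in) auto
  have Lmax: "\<And>L. L \<in> R \<Longrightarrow> L \<le> Lam" unfolding Lam_def using fR by simp
  obtain i0 where i0: "i0 + Lam \<le> n" "\<forall>q\<in>{i0..<i0+Lam}. 0 < w q" using LR unfolding R_def by auto
  have Ln: "Lam < n"
  proof (rule ccontr)
    assume "\<not> Lam < n"
    hence h: "i0 = 0" "Lam = n" using i0 by auto
    hence "l0 \<in> {i0..<i0+Lam}" using Z by simp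
    hence "0 < w l0" using i0(2) by blast
    thus False using Z by simp
  qed
  have Lc: "\<And>i j. i < j \<Longrightarrow> j \<le> n \<Longrightarrow> Tu k w i j \<noteq> 0 \<Longrightarrow> j \<le> i + Lam"
  proof -
    fix i j assume ij: "i < j" "j \<le> n" "Tu k w i j \<noteq> 0"
    hence pos: "\<forall>q\<in>{i..<j}. 0 < w q" unfolding Tu_def by (auto split: if_splits)
    have "j - i \<in> R" unfolding R_def using ij pos by (intro CollectI exI[of _ i]) auto
    thus "j \<le> i + Lam" using Lmax by fastforce
  qed
  have NB: "Nu k (Suc n) w \<le> real Lam * Pu n w" by (rule Nu_bound[OF k w0 Lc])
  have fS: "finite (Sigma {..<Suc n} (\<lambda>i. {i<..<Suc n}))" by auto
  show ?thesis
  proof (cases "i0 + Lam < n")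
    case True
    define l where "l = i0 + Lam"
    have ln: "l < n" using True unfolding l_def .
    have wl: "w l = 0"
    proof (rule ccontr)
      assume "w l \<noteq> 0"
      hence "w l > 0" using w0 ln by (simp add: less_le)
      hence "\<forall>q\<in>{i0..<i0+Suc Lam}. 0 < w q" using i0 unfolding l_def
        by (auto simp: less_Suc_eq)
      hence "Suc Lam \<in> R" unfolding R_def using True by (intro CollectI exI[of _ i0]) auto
      thus False using Lmax by fastforce
    qed
    define A where "A = (\<lambda>i. (i, Suc l)) ` {i0..l}"
    have cA: "card A = Lam + 1" unfolding A_def by (subst card_image) (auto simp: inj_on_def l_def)
    have AS: "A \<subseteq> Sigma {..<Suc n} (\<lambda>i. {i<..<Suc n})" unfolding A_def using ln by auto
    have Ap: "\<forall>(i,j)\<in>A. i \<le> l \<and> l < j \<and> (\<forall>q\<in>{i..<j}. q \<noteq> l \<longrightarrow> w q > 0)"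
      unfolding A_def using i0 by (auto simp: l_def)
    obtain e where "e > 0" "Nu k (Suc n) w / Pu n w \<le> Nu k (Suc n) (w(l := e)) / Pu n (w(l := e))"
      using gain[OF k w0 ln wl P NB AS Ap] cA by auto
    thus ?thesis using ln wl by blast
  next
    case False
    hence eq: "i0 + Lam = n" using i0 by simp
    hence i0p: "i0 > 0" using Ln by simp
    define l where "l = i0 - 1"
    have ln: "l < n" using i0p eq unfolding l_def by simp
    have wl: "w l = 0"
    proof (rule ccontr)
      assume "w l \<noteq> 0"
      hence wlp: "w l > 0" using w0 ln by (simp add: less_le)
      have "\<forall>q\<in>{l..<l+Suc Lam}. 0 < w q"
      proof
        fix q assume q: "q \<in> {l..<l+Suc Lam}"
        show "0 < w q"
        proof (cases "q = l")
          case True then show ?thesis using wlp by simp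
        next
          case False
          hence "q \<in> {i0..<i0+Lam}" using q i0p unfolding l_def by auto
          then show ?thesis using i0 by auto
        qed
      qed
      hence "Suc Lam \<in> R" unfolding R_def using eq i0p unfolding l_def by (intro CollectI exI[of _ l]) (auto simp: l_def)
      thus False using Lmax by fastforce
    qed
    define A where "A = (\<lambda>j. (l, j)) ` {Suc l..n}"
    have cA: "card A = Lam + 1" unfolding A_def using eq i0p
      by (subst card_image) (auto simp: inj_on_def l_def)
    have AS: "A \<subseteq> Sigma {..<Suc n} (\<lambda>i. {i<..<Suc n})" unfolding A_def using ln by auto
    have Ap: "\<forall>(i,j)\<in>A. i \<le> l \<and> l < j \<and> (\<forall>q\<in>{i..<j}. q \<noteq> l \<longrightarrow> w q > 0)"
    proof
      fix ij assume "ij \<in> A"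
      then obtain j where ij: "ij = (l, j)" "j \<in> {Suc l..n}" unfolding A_def by auto
      have "\<forall>q\<in>{l..<j}. q \<noteq> l \<longrightarrow> w q > 0"
      proof (intro ballI impI)
        fix q assume "q \<in> {l..<j}" "q \<noteq> l"
        hence "q \<in> {i0..<i0+Lam}" using ij eq i0p unfolding l_def by auto
        thus "w q > 0" using i0 by auto
      qed
      thus "case ij of (i, j) \<Rightarrow> i \<le> l \<and> l < j \<and> (\<forall>q\<in>{i..<j}. q \<noteq> l \<longrightarrow> w q > 0)"
        using ij by auto
    qed
    obtain e where "e > 0" "Nu k (Suc n) w / Pu n w \<le> Nu k (Suc n) (w(l := e)) / Pu n (w(l := e))"
      using gain[OF k w0 ln wl P NB AS Ap] cA by auto
    thus ?thesis using ln wl by blast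
  qed
qed

lemma fill:
  assumes k: "k > 0"
  shows "\<forall>w. (\<forall>q<n. w q \<ge> 0) \<longrightarrow> Pu n w > 0 \<longrightarrow> card {q\<in>{..<n}. w q = 0} = z \<longrightarrow>
    (\<exists>v. (\<forall>q<n. v q > 0) \<and> Nu k (Suc n) w / Pu n w \<le> Nu k (Suc n) v / Pu n v)"
proof (induction z)
  case 0
  show ?case
  proof (intro allI impI)
    fix w :: "nat \<Rightarrow> real" assume w0: "\<forall>q<n. w q \<ge> 0" and "Pu n w > 0" and c: "card {q\<in>{..<n}. w q = 0} = 0"
    have "{q\<in>{..<n}. w q = 0} = {}" using c by simp
    hence "\<forall>q<n. w q > 0" using w0 by (force simp: less_le)
    thus "\<exists>v. (\<forall>q<n. v q > 0) \<and> Nu k (Suc n) w / Pu n w \<le> Nu k (Suc n) v / Pu n v" by blast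
  qed
next
  case (Suc z)
  show ?case
  proof (intro allI impI)
    fix w :: "nat \<Rightarrow> real" assume w0: "\<forall>q<n. w q \<ge> 0" and P: "Pu n w > 0" and c: "card {q\<in>{..<n}. w q = 0} = Suc z"
    have "{q\<in>{..<n}. w q = 0} \<noteq> {}" using c by (metis card.empty nat.distinct(1))
    then obtain l0 where l0: "l0 < n" "w l0 = 0" by auto
    obtain l e where l: "l < n" "w l = 0" and e: "e > 0"
      and r: "Nu k (Suc n) w / Pu n w \<le> Nu k (Suc n) (w(l := e)) / Pu n (w(l := e))"
      using fill_step[OF k w0 P l0] by blast
    define w' where "w' = w(l := e)"
    have w0': "\<forall>q<n. w' q \<ge> 0" using w0 e unfolding w'_def by auto
    have P': "Pu n w' > 0" unfolding w'_def Pu_upd[of l n w, OF l] using P e by simp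
    have "{q\<in>{..<n}. w' q = 0} = {q\<in>{..<n}. w q = 0} - {l}" unfolding w'_def using e by auto
    hence c': "card {q\<in>{..<n}. w' q = 0} = z" using c l by (simp add: card_Diff_singleton)
    obtain v where v: "\<forall>q<n. v q > 0" "Nu k (Suc n) w' / Pu n w' \<le> Nu k (Suc n) v / Pu n v"
      using Suc.IH w0' P' c' by blast
    thus "\<exists>v. (\<forall>q<n. v q > 0) \<and> Nu k (Suc n) w / Pu n w \<le> Nu k (Suc n) v / Pu n v"
      using r unfolding w'_def by force
  qed
qed

lemma subseq_conv:
  fixes f :: "nat \<Rightarrow> nat \<Rightarrow> real"
  assumes B: "\<forall>q l. \<bar>f q l\<bar> \<le> K"
  shows "\<exists>r. strict_mono r \<and> (\<forall>l<n. \<exists>c. (\<lambda>q. f (r q) l) \<longlonglongrightarrow> c)"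
proof (induction n)
  case 0
  have "strict_mono (id :: nat \<Rightarrow> nat)" by (simp add: strict_mono_def)
  then show ?case by blast
next
  case (Suc n)
  then obtain r where r: "strict_mono r" "\<forall>l<n. \<exists>c. (\<lambda>q. f (r q) l) \<longlonglongrightarrow> c" by blast
  obtain r2 where r2: "strict_mono r2" "monoseq (\<lambda>q. f (r (r2 q)) n)"
    using seq_monosub[of "\<lambda>q. f (r q) n"] by blast
  have "Bseq (\<lambda>q. f (r (r2 q)) n)" using B by (intro BseqI'[of _ K]) simp
  hence "convergent (\<lambda>q. f (r (r2 q)) n)" using r2(2) by (rule Bseq_monoseq_convergent)
  hence cn: "\<exists>c. (\<lambda>q. f (r (r2 q)) n) \<longlonglongrightarrow> c" by (simp add: convergent_def)
  have cl: "\<forall>l<n. \<exists>c. (\<lambda>q. f (r (r2 q)) l) \<longlonglongrightarrow> c"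
  proof (intro allI impI)
    fix l assume "l < n"
    then obtain c where "(\<lambda>q. f (r q) l) \<longlonglongrightarrow> c" using r by blast
    from LIMSEQ_subseq_LIMSEQ[OF this r2(1)] show "\<exists>c. (\<lambda>q. f (r (r2 q)) l) \<longlonglongrightarrow> c" by (auto simp: o_def)
  qed
  have "strict_mono (r \<circ> r2)" using r(1) r2(1) by (rule strict_mono_o)
  moreover have "\<forall>l<Suc n. \<exists>c. (\<lambda>q. f ((r \<circ> r2) q) l) \<longlonglongrightarrow> c"
    using cl cn by (auto simp: less_Suc_eq)
  ultimately show ?case by blast
qed

lemma Tu_lim:
  fixes w :: "nat \<Rightarrow> nat \<Rightarrow> real"
  assumes k: "k > 0" and ij: "i < j"
    and wp: "\<forall>q. \<forall>l\<in>{i..<j}. w q l > 0"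
    and lim: "\<forall>l\<in>{i..<j}. (\<lambda>q. w q l) \<longlonglongrightarrow> ws l"
    and ws0: "\<forall>l\<in>{i..<j}. ws l \<ge> 0"
  shows "(\<lambda>q. Tu k (w q) i j) \<longlonglongrightarrow> Tu k ws i j"
proof (cases "\<forall>l\<in>{i..<j}. 0 < ws l")
  case True
  have e: "\<And>q. Tu k (w q) i j = (\<Sum>l\<in>{i..<j}. w q l powr (-1/k)) powr (-k)"
    unfolding Tu_def using wp by simp
  have es: "Tu k ws i j = (\<Sum>l\<in>{i..<j}. ws l powr (-1/k)) powr (-k)"
    unfolding Tu_def using True by simp
  have pos: "(\<Sum>l\<in>{i..<j}. ws l powr (-1/k)) > 0"
  proof (rule sum_pos)
    fix l assume l: "l \<in> {i..<j}"
    have "0 < ws l" using True l by blast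
    thus "0 < ws l powr (-1/k)" by simp
  qed (use ij in auto)
  have "(\<lambda>q. \<Sum>l\<in>{i..<j}. w q l powr (-1/k)) \<longlonglongrightarrow> (\<Sum>l\<in>{i..<j}. ws l powr (-1/k))"
  proof (rule tendsto_sum)
    fix l assume l: "l \<in> {i..<j}"
    have "0 < ws l" using True l by blast
    hence "ws l \<noteq> 0" by simp
    moreover have "(\<lambda>q. w q l) \<longlonglongrightarrow> ws l" using lim l by blast
    ultimately show "(\<lambda>q. w q l powr (-1/k)) \<longlonglongrightarrow> ws l powr (-1/k)"
      by (intro tendsto_powr tendsto_const)
  qed
  hence "(\<lambda>q. (\<Sum>l\<in>{i..<j}. w q l powr (-1/k)) powr (-k)) \<longlonglongrightarrow> (\<Sum>l\<in>{i..<j}. ws l powr (-1/k)) powr (-k)"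
    using pos by (intro tendsto_powr tendsto_const) auto
  then show ?thesis unfolding e es .
next
  case False
  then obtain l0 where l0: "l0 \<in> {i..<j}" "ws l0 \<le> 0" by auto
  hence z: "ws l0 = 0" using ws0 by force
  have es: "Tu k ws i j = 0" unfolding Tu_def by (rule if_not_P[OF False])
  have up: "\<And>q. Tu k (w q) i j \<le> w q l0" using l0 wp by (intro Tu_le[OF k]) auto
  have "(\<lambda>q. w q l0) \<longlonglongrightarrow> ws l0" using lim l0(1) by blast
  hence "(\<lambda>q. w q l0) \<longlonglongrightarrow> 0" using z by simp
  hence "(\<lambda>q. Tu k (w q) i j) \<longlonglongrightarrow> 0"
    by (rule tendsto_sandwich[rotated 2, OF tendsto_const]) (simp_all add: Tu_nonneg up)
  then show ?thesis unfolding es .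
qed

lemma ratio_gap:
  assumes m: "m > 1" and X: "X \<in> Rp p"
  shows "ratio m p X = 2 * Nu (m-1) p (\<lambda>l. gap X l powr (-(m-1))) / Pu (p-1) (\<lambda>l. gap X l powr (-(m-1)))"
proof -
  define u where "u = (\<lambda>l. gap X l powr (-(m-1)))"
  have k: "m - 1 > 0" using m by simp
  have up: "\<forall>l. Suc l < p \<longrightarrow> u l > 0"
  proof (intro allI impI)
    fix l assume "Suc l < p"
    hence "gap X l > 0" by (rule gap_pos[OF X])
    thus "u l > 0" unfolding u_def by simp
  qed
  have "cfg p (\<lambda>l. u l powr (-1/(m-1))) = cfg p (gap X)"
    unfolding u_def using gap_pos[OF X] powr_inv_k[OF k] by (intro cfg_cong) auto
  hence "X = cfg p (\<lambda>l. u l powr (-1/(m-1)))" using cfg_gap[OF X] by simp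
  thus ?thesis using ratio_u[OF m up] unfolding u_def by simp
qed

lemma Pu_pos: "n \<ge> 1 \<Longrightarrow> \<forall>l<n. u l > 0 \<Longrightarrow> Pu n u > 0"
proof -
  assume n: "n \<ge> 1" and u: "\<forall>l<n. u l > 0"
  have "0 \<in> {..<n}" using n by simp
  hence "{..<n} \<noteq> {}" by blast
  thus ?thesis unfolding Pu_def using u by (intro sum_pos) auto
qed

lemma ratio_le:
  assumes m: "m > 1" and p: "p = Suc n" and n: "n \<ge> 1" and X: "X \<in> Rp p"
  shows "ratio m p X \<le> 2 * real n"
proof -
  define u where "u = (\<lambda>l. gap X l powr (-(m-1)))"
  have k: "m - 1 > 0" using m by simp
  have up: "\<forall>l<n. u l > 0"
  proof (intro allI impI)
    fix l assume "l < n"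
    hence "gap X l > 0" using p by (intro gap_pos[OF X]) simp
    thus "u l > 0" unfolding u_def by simp
  qed
  have P: "Pu n u > 0" using Pu_pos[OF n up] .
  have "Nu (m-1) (Suc n) u \<le> real n * Pu n u"
    using up by (intro Nu_bound[OF k]) (auto simp: less_imp_le)
  hence "2 * Nu (m-1) p u / Pu n u \<le> 2 * real n" using P p by (simp add: divide_le_eq)
  thus ?thesis using ratio_gap[OF m X] p unfolding u_def by simp
qed

lemma Rp_ne: "Rp p \<noteq> {}"
  using cfg_in_Rp[of p "\<lambda>_. 1"] by auto

lemma bdd_ratio:
  assumes m: "m > 1" and p: "p = Suc n" and n: "n \<ge> 1"
  shows "bdd_above (ratio m p ` Rp p)"
  using ratio_le[OF m p n] by (intro bdd_aboveI[of _ "2 * real n"]) auto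

lemma sup_attained:
  assumes m: "m > 1" and p: "p = Suc n" and n: "n \<ge> 1"
  shows "\<exists>X\<in>Rp p. ratio m p X = (SUP X\<in>Rp p. ratio m p X)"
proof -
  define k where "k = m - 1"
  have k: "k > 0" using m unfolding k_def by simp
  define s where "s = (SUP X\<in>Rp p. ratio m p X)"
  have bdd: "bdd_above (ratio m p ` Rp p)" by (rule bdd_ratio[OF m p n])
  have "\<forall>q. \<exists>X. X \<in> Rp p \<and> s - inverse (real (Suc q)) < ratio m p X"
  proof
    fix q
    have "s - inverse (real (Suc q)) < s" by simp
    then show "\<exists>X. X \<in> Rp p \<and> s - inverse (real (Suc q)) < ratio m p X"
      unfolding s_def using less_cSUP_iff[OF Rp_ne bdd] by blast
  qed
  then obtain Xs where Xs: "\<And>q. Xs q \<in> Rp p" "\<And>q. s - inverse (real (Suc q)) < ratio m p (Xs q)"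
    by metis
  have rle: "\<And>X. X \<in> Rp p \<Longrightarrow> ratio m p X \<le> s" unfolding s_def using bdd by (simp add: cSUP_upper)
  define uu where "uu = (\<lambda>q l. gap (Xs q) l powr (-k))"
  define PP where "PP = (\<lambda>q. Pu n (uu q))"
  define u where "u = (\<lambda>q l. (1 / PP q) * uu q l)"
  have uup: "\<And>q l. l < n \<Longrightarrow> uu q l > 0"
  proof -
    fix q l assume "l < n"
    hence "gap (Xs q) l > 0" using p by (intro gap_pos[OF Xs(1)]) simp
    thus "uu q l > 0" unfolding uu_def by simp
  qed
  have PPp: "\<And>q. PP q > 0" unfolding PP_def using Pu_pos[OF n] uup by blast
  have up: "\<And>q l. l < n \<Longrightarrow> u q l > 0" unfolding u_def using uup PPp by simp
  have ule: "\<And>q l. l < n \<Longrightarrow> u q l \<le> 1"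
  proof -
    fix q l assume l: "l < n"
    have "uu q l \<le> PP q" unfolding PP_def Pu_def using l uup by (intro member_le_sum) (auto simp: less_imp_le)
    thus "u q l \<le> 1" unfolding u_def using PPp[of q] by simp
  qed
  have Pu1: "\<And>q. Pu n (u q) = 1"
  proof -
    fix q
    have "PP q \<noteq> 0" using PPp[of q] by simp
    thus "Pu n (u q) = 1" unfolding u_def Pu_scale by (simp add: PP_def)
  qed
  have rat: "\<And>q. ratio m p (Xs q) = 2 * Nu k p (u q)"
  proof -
    fix q
    have "Nu k p (u q) = (1 / PP q) * Nu k p (uu q)" unfolding u_def using PPp[of q] by (intro Nu_scale[OF k]) simp
    thus "ratio m p (Xs q) = 2 * Nu k p (u q)"
      using ratio_gap[OF m Xs(1)[of q]] p PPp[of q] unfolding uu_def PP_def k_def by simp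
  qed
  define f where "f = (\<lambda>q l. if l < n then u q l else 0)"
  have fb: "\<forall>q l. \<bar>f q l\<bar> \<le> 1" unfolding f_def using up ule by (auto simp: less_imp_le)
  obtain r where r: "strict_mono r" "\<forall>l<n. \<exists>c. (\<lambda>q. f (r q) l) \<longlonglongrightarrow> c"
    using subseq_conv[OF fb] by blast
  define us where "us = (\<lambda>l. lim (\<lambda>q. u (r q) l))"
  have ulim: "\<And>l. l < n \<Longrightarrow> (\<lambda>q. u (r q) l) \<longlonglongrightarrow> us l"
  proof -
    fix l assume l: "l < n"
    have "\<exists>c. (\<lambda>q. u (r q) l) \<longlonglongrightarrow> c" using r(2) l unfolding f_def by simp
    hence "convergent (\<lambda>q. u (r q) l)" by (simp add: convergent_def)
    thus "(\<lambda>q. u (r q) l) \<longlonglongrightarrow> us l" unfolding us_def by (simp add: convergent_LIMSEQ_iff)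
  qed
  have us0: "\<And>l. l < n \<Longrightarrow> us l \<ge> 0"
  proof -
    fix l assume l: "l < n"
    show "us l \<ge> 0" using ulim[OF l] up[OF l] by (intro LIMSEQ_le_const) (auto simp: less_imp_le)
  qed
  have "(\<lambda>q. Pu n (u (r q))) \<longlonglongrightarrow> Pu n us" unfolding Pu_def using ulim by (intro tendsto_sum) auto
  hence Pus: "Pu n us = 1" unfolding Pu1 using LIMSEQ_unique[OF _ tendsto_const] by metis
  have Nlim: "(\<lambda>q. Nu k p (u (r q))) \<longlonglongrightarrow> Nu k p us"
    unfolding Nu_def
  proof (intro tendsto_sum)
    fix i j assume i: "i \<in> {..<p}" and j: "j \<in> {i<..<p}"
    show "(\<lambda>q. Tu k (u (r q)) i j) \<longlonglongrightarrow> Tu k us i j"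
      using i j p up ulim us0 by (intro Tu_lim[OF k]) auto
  qed
  have rlim: "(\<lambda>q. ratio m p (Xs (r q))) \<longlonglongrightarrow> s"
  proof (rule tendsto_sandwich[of "\<lambda>q. s + - inverse (real (Suc q))" _ _ "\<lambda>q. s"])
    show "eventually (\<lambda>q. s + - inverse (real (Suc q)) \<le> ratio m p (Xs (r q))) sequentially"
    proof (rule always_eventually, rule allI)
      fix q
      have "q \<le> r q" using seq_suble[OF r(1)] .
      hence "inverse (real (Suc (r q))) \<le> inverse (real (Suc q))" by (simp add: le_imp_inverse_le)
      thus "s + - inverse (real (Suc q)) \<le> ratio m p (Xs (r q))" using Xs(2)[of "r q"] by linarith
    qed
    show "eventually (\<lambda>q. ratio m p (Xs (r q)) \<le> s) sequentially"
      using rle Xs(1) by (intro always_eventually) auto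
  qed (rule LIMSEQ_inverse_real_of_nat_add_minus tendsto_const)+
  have "(\<lambda>q. ratio m p (Xs (r q))) \<longlonglongrightarrow> 2 * Nu k p us" unfolding rat by (intro tendsto_intros Nlim)
  hence sN: "2 * Nu k p us = s" using rlim LIMSEQ_unique by blast
  obtain v where v: "\<forall>q<n. v q > 0" "Nu k (Suc n) us / Pu n us \<le> Nu k (Suc n) v / Pu n v"
  proof -
    have "\<forall>q<n. us q \<ge> 0" using us0 by blast
    moreover have "Pu n us > 0" using Pus by simp
    ultimately show ?thesis using fill[OF k, of n "card {q\<in>{..<n}. us q = 0}", rule_format, of us] that by blast
  qed
  define X where "X = cfg p (\<lambda>l. v l powr (-1/(m-1)))"
  have vp: "\<forall>l. Suc l < p \<longrightarrow> v l > 0" using v p by auto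
  have XR: "X \<in> Rp p" unfolding X_def using vp by (intro cfg_in_Rp) auto
  have rX: "ratio m p X = 2 * Nu k p v / Pu n v" unfolding X_def using ratio_u[OF m vp] p k_def by simp
  have "Nu k p us \<le> Nu k p v / Pu n v" using v(2) Pus p by simp
  hence "2 * Nu k p us \<le> 2 * (Nu k p v / Pu n v)" by simp
  hence "s \<le> ratio m p X" unfolding rX sN by simp
  moreover have "ratio m p X \<le> s" using rle XR .
  ultimately show ?thesis using XR unfolding s_def by (intro bexI[of _ X]) auto
qed

lemma S1_pos: "p \<ge> 2 \<Longrightarrow> (\<forall>l. Suc l < p \<longrightarrow> g l > 0) \<Longrightarrow> S1 m p g > 0"
proof -
  assume p: "p \<ge> 2" and g: "\<forall>l. Suc l < p \<longrightarrow> g l > 0"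
  have "0 \<in> {..<p-1}" using p by simp
  hence ne: "{..<p-1} \<noteq> {}" by blast
  show ?thesis unfolding S1_def
  proof (rule sum_pos)
    fix i assume "i \<in> {..<p-1}"
    hence "Suc i < p" by auto
    hence "g i > 0" using g by blast
    thus "0 < g i powr (1-m)" by simp
  qed (use ne in auto)
qed

lemma Fm_form:
  assumes Y: "Y \<in> Rp p" and p: "p \<ge> 2"
  shows "Fma m chi 0 p Y = (S1 m p (gap Y) - chi * S2 m p (gap Y)) / (m-1)"
    and "ratio m p Y = S2 m p (gap Y) / S1 m p (gap Y)"
    and "S1 m p (gap Y) > 0"
proof -
  have g: "\<forall>l. Suc l < p \<longrightarrow> gap Y l > 0" using gap_pos[OF Y] by blast
  have p1: "p \<ge> 1" using p by simp
  show "Fma m chi 0 p Y = (S1 m p (gap Y) - chi * S2 m p (gap Y)) / (m-1)"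
    using Fma_cfg[OF g p1, of m chi 0] unfolding cfg_gap[OF Y] by (simp add: diff_divide_distrib)
  show "ratio m p Y = S2 m p (gap Y) / S1 m p (gap Y)"
    using ratio_cfg[OF g, of m] unfolding cfg_gap[OF Y] .
  show "S1 m p (gap Y) > 0" using S1_pos[OF p g] .
qed

lemma powr_neg_inj:
  fixes x y k :: real
  assumes k: "k > 0" and x: "x > 0" and y: "y > 0" and e: "x powr (-k) = y powr (-k)"
  shows "x = y"
proof -
  have "x = (x powr (-k)) powr (-1/k)" using powr_inv_k[OF k x] by simp
  also have "\<dots> = (y powr (-k)) powr (-1/k)" using e by simp
  also have "\<dots> = y" using powr_inv_k[OF k y] .
  finally show ?thesis .
qed

lemma part2:
  assumes m: "m > 1" and chi: "chi > 0" and p: "p \<ge> 2" and C: "chi = Cp m p"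
  shows "(\<exists>V. is_minimizer (Fm m chi p) (Rp p) V) \<and>
    (\<forall>V V'. is_minimizer (Fm m chi p) (Rp p) V \<and> is_minimizer (Fm m chi p) (Rp p) V' \<longrightarrow> (\<exists>l>0. V' = (\<lambda>i. l * V i)))"
proof -
  obtain n where pn: "p = Suc n" and n: "n \<ge> 1" using p by (metis Suc_le_D Suc_le_mono one_add_one plus_1_eq_Suc)
  define s where "s = (SUP X\<in>Rp p. ratio m p X)"
  have cs: "chi = 1 / s" using C unfolding Cp_def s_def .
  have spos: "s > 0" using chi cs by (simp add: zero_less_divide_iff)
  have k: "m - 1 > 0" using m by simp
  have bdd: "bdd_above (ratio m p ` Rp p)" by (rule bdd_ratio[OF m pn n])
  have rle: "\<And>X. X \<in> Rp p \<Longrightarrow> ratio m p X \<le> s" unfolding s_def using bdd by (simp add: cSUP_upper)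
  obtain Xs where XsR: "Xs \<in> Rp p" and Xsr: "ratio m p Xs = s"
    using sup_attained[OF m pn n] unfolding s_def by blast
  have Fnn: "\<And>Y. Y \<in> Rp p \<Longrightarrow> Fm m chi p Y \<ge> 0"
  proof -
    fix Y assume Y: "Y \<in> Rp p"
    note F = Fm_form(1)[OF Y p, of m chi] Fm_form(2)[OF Y p, of m] Fm_form(3)[OF Y p, of m]
    have "S2 m p (gap Y) / S1 m p (gap Y) \<le> s" using rle[OF Y] F(2) by simp
    hence "S2 m p (gap Y) \<le> s * S1 m p (gap Y)" using F(3) by (simp add: divide_le_eq)
    hence "chi * S2 m p (gap Y) \<le> chi * (s * S1 m p (gap Y))" using chi by simp
    also have "chi * (s * S1 m p (gap Y)) = S1 m p (gap Y)" using cs spos by simp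
    finally show "Fm m chi p Y \<ge> 0" unfolding F(1) using k by simp
  qed
  have Fz: "Fm m chi p Xs = 0"
  proof -
    note F = Fm_form(1)[OF XsR p, of m chi] Fm_form(2)[OF XsR p, of m] Fm_form(3)[OF XsR p, of m]
    have "S2 m p (gap Xs) = s * S1 m p (gap Xs)" using Xsr F(2) F(3) by (simp add: divide_eq_eq)
    hence "chi * S2 m p (gap Xs) = S1 m p (gap Xs)" using cs spos by simp
    thus ?thesis unfolding F(1) by simp
  qed
  have ex: "is_minimizer (Fm m chi p) (Rp p) Xs"
    unfolding is_minimizer_def using XsR Fz Fnn by auto
  have zero: "\<And>V. is_minimizer (Fm m chi p) (Rp p) V \<Longrightarrow> S1 m p (gap V) = chi * S2 m p (gap V)"
  proof -
    fix V assume "is_minimizer (Fm m chi p) (Rp p) V"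
    hence V: "V \<in> Rp p" "Fm m chi p V \<le> Fm m chi p Xs" unfolding is_minimizer_def using XsR by auto
    hence "Fm m chi p V = 0" using Fz Fnn[OF V(1)] by simp
    thus "S1 m p (gap V) = chi * S2 m p (gap V)" unfolding Fm_form(1)[OF V(1) p] using k by simp
  qed
  have uniq: "\<And>V V'. is_minimizer (Fm m chi p) (Rp p) V \<Longrightarrow> is_minimizer (Fm m chi p) (Rp p) V' \<Longrightarrow> \<exists>l>0. V' = (\<lambda>i. l * V i)"
  proof -
    fix V V' assume mV: "is_minimizer (Fm m chi p) (Rp p) V" and mV': "is_minimizer (Fm m chi p) (Rp p) V'"
    have V: "V \<in> Rp p" and V': "V' \<in> Rp p" using mV mV' unfolding is_minimizer_def by auto
    define g where "g = gap V"
    define g' where "g' = gap V'"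
    have gp: "\<forall>l. Suc l < p \<longrightarrow> g l > 0" unfolding g_def using gap_pos[OF V] by blast
    have gp': "\<forall>l. Suc l < p \<longrightarrow> g' l > 0" unfolding g'_def using gap_pos[OF V'] by blast
    have p1: "p \<ge> 1" using p by simp
    have t: "0 \<le> (1/2::real)" "(1/2::real) \<le> 1" by auto
    define G where "G = gt m (1/2) g g'"
    have Gdef: "G = (\<lambda>l. Mt (m-1) (1/2) (g l) (g' l))" unfolding G_def using gt_def[OF m p1 gp gp' t] .
    have Gp: "\<forall>l. Suc l < p \<longrightarrow> G l > 0" unfolding G_def using gt_pos[OF m p1 gp gp' t] .
    have ZR: "cfg p G \<in> Rp p" using cfg_in_Rp[OF Gp] .
    have gG: "gap (cfg p G) = G \<or> True" by simp
    have FZ: "Fm m chi p (cfg p G) \<ge> 0" using Fnn[OF ZR] .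
    have FZ': "Fm m chi p (cfg p G) = (S1 m p G - chi * S2 m p G) / (m-1)"
      using Fma_cfg[OF Gp p1, of m chi 0] by (simp add: diff_divide_distrib)
    have s1: "chi * S2 m p G \<le> S1 m p G" using FZ unfolding FZ' using k by (simp add: zero_le_divide_iff)
    have S1G: "S1 m p G = (1 - 1/2) * S1 m p g + 1/2 * S1 m p g'"
      unfolding G_def by (rule S1_gt[OF m p1 gp gp' t])
    have z1: "S1 m p g = chi * S2 m p g" using zero[OF mV] unfolding g_def .
    have z2: "S1 m p g' = chi * S2 m p g'" using zero[OF mV'] unfolding g'_def .
    have "chi * S2 m p G \<le> chi * ((1 - 1/2) * S2 m p g + 1/2 * S2 m p g')"
      using s1 unfolding S1G z1 z2 by (simp add: algebra_simps)
    hence up: "S2 m p G \<le> (1 - 1/2) * S2 m p g + 1/2 * S2 m p g'" using chi by simp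
    define d where "d = (\<lambda>i j. Dd G i j powr (1-m) - ((1 - 1/2) * Dd g i j powr (1-m) + 1/2 * Dd g' i j powr (1-m)))"
    have dnn: "\<And>i j. i < p \<Longrightarrow> j \<in> {..<p}-{i} \<Longrightarrow> d i j \<ge> 0"
      unfolding d_def G_def using Dd_gt_term[OF m p1 gp gp' t] by auto
    have "(\<Sum>i<p. \<Sum>j\<in>{..<p}-{i}. d i j) = S2 m p G - ((1 - 1/2) * S2 m p g + 1/2 * S2 m p g')"
      unfolding d_def S2_def by (simp add: sum_subtractf sum.distrib sum_distrib_left)
    hence "(\<Sum>i<p. \<Sum>j\<in>{..<p}-{i}. d i j) \<le> 0" using up by simp
    moreover have "(\<Sum>i<p. \<Sum>j\<in>{..<p}-{i}. d i j) \<ge> 0" using dnn by (intro sum_nonneg) auto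
    ultimately have "(\<Sum>i<p. \<Sum>j\<in>{..<p}-{i}. d i j) = 0" by simp
    hence "\<forall>i\<in>{..<p}. (\<Sum>j\<in>{..<p}-{i}. d i j) = 0"
      using dnn by (subst sum_nonneg_eq_0_iff[symmetric]) (auto intro: sum_nonneg)
    hence inner: "\<And>i. i < p \<Longrightarrow> (\<Sum>j\<in>{..<p}-{i}. d i j) = 0" by blast
    have dz: "\<And>i j. i < p \<Longrightarrow> j \<in> {..<p}-{i} \<Longrightarrow> d i j = 0"
    proof -
      fix i j assume i: "i < p" and j: "j \<in> {..<p}-{i}"
      have "\<forall>x\<in>{..<p}-{i}. d i x = 0"
        using sum_nonneg_eq_0_iff[of "{..<p}-{i}" "d i"] inner[OF i] dnn[OF i] by auto
      thus "d i j = 0" using j by blast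
    qed
    have propg: "\<And>l. Suc (Suc l) < p \<Longrightarrow> g l * g' (Suc l) = g' l * g (Suc l)"
    proof -
      fix l assume l: "Suc (Suc l) < p"
      have dd: "d l (Suc (Suc l)) = 0" using dz[of l "Suc (Suc l)"] l by simp
      have DG: "Dd G l (Suc (Suc l)) = G l + G (Suc l)" unfolding Dd_def by (simp add: numeral_2_eq_2)
      have Dg: "Dd g l (Suc (Suc l)) = g l + g (Suc l)" unfolding Dd_def by (simp add: numeral_2_eq_2)
      have Dg': "Dd g' l (Suc (Suc l)) = g' l + g' (Suc l)" unfolding Dd_def by (simp add: numeral_2_eq_2)
      have a: "g l > 0" "g' l > 0" using gp gp' l by auto
      have b: "g (Suc l) > 0" "g' (Suc l) > 0" using gp gp' l by auto
      have Gpos: "G l + G (Suc l) > 0" using Gp l by (simp add: add_pos_pos)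
      have Mpos: "Mt (m-1) (1/2) (g l + g (Suc l)) (g' l + g' (Suc l)) > 0"
        using a b by (intro Mt_pos) auto
      have "(G l + G (Suc l)) powr (-(m-1)) = (1 - 1/2) * (g l + g (Suc l)) powr (-(m-1)) + 1/2 * (g' l + g' (Suc l)) powr (-(m-1))"
        using dd unfolding d_def DG Dg Dg' by simp
      also have "\<dots> = Mt (m-1) (1/2) (g l + g (Suc l)) (g' l + g' (Suc l)) powr (-(m-1))"
        using a b by (intro Mt_pow[symmetric] k) auto
      finally have "G l + G (Suc l) = Mt (m-1) (1/2) (g l + g (Suc l)) (g' l + g' (Suc l))"
        using powr_neg_inj[OF k Gpos Mpos] by blast
      hence "Mt (m-1) (1/2) (g l) (g' l) + Mt (m-1) (1/2) (g (Suc l)) (g' (Suc l)) = Mt (m-1) (1/2) (g l + g (Suc l)) (g' l + g' (Suc l))"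
        unfolding Gdef by simp
      from Mt_super_eq[OF k a b _ _ this] show "g l * g' (Suc l) = g' l * g (Suc l)" by simp
    qed
    define lam where "lam = g' 0 / g 0"
    have g00: "g 0 > 0" "g' 0 > 0" using gp gp' p by auto
    have lam: "lam > 0" unfolding lam_def using g00 by simp
    have gl: "\<And>l. Suc l < p \<Longrightarrow> g' l = lam * g l"
    proof -
      fix l show "Suc l < p \<Longrightarrow> g' l = lam * g l"
      proof (induction l)
        case 0 then show ?case unfolding lam_def using g00 by simp
      next
        case (Suc l)
        hence IH: "g' l = lam * g l" by simp
        have pr: "g l * g' (Suc l) = g' l * g (Suc l)" using propg Suc.prems by simp
        have "g l > 0" using gp Suc.prems by simp
        then show ?case using pr unfolding IH by (simp add: algebra_simps)
      qed
    qed
    have "V' = cfg p g'" unfolding g'_def cfg_gap[OF V'] ..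
    also have "\<dots> = cfg p (\<lambda>l. lam * g l)" using gl by (intro cfg_cong) auto
    also have "\<dots> = (\<lambda>i. lam * cfg p g i)" by (rule cfg_scale)
    also have "cfg p g = V" unfolding g_def by (rule cfg_gap[OF V])
    finally show "\<exists>l>0. V' = (\<lambda>i. l * V i)" using lam by blast
  qed
  show ?thesis using ex uniq by blast
qed

theorem theorem3p1:
  fixes m chi alpha :: real and p :: nat
  assumes "m > 1" and "chi > 0" and "p \<ge> 2"
  shows "(alpha \<ge> 0 \<longrightarrow>
            (\<forall>X. critical_point m chi alpha p X \<longrightarrow> is_minimizer (Fma m chi alpha p) (Rp p) X))
       \<and> (chi = Cp m p \<longrightarrow>
            (\<exists>V. is_minimizer (Fm m chi p) (Rp p) V) \<and>
            (\<forall>V V'. is_minimizer (Fm m chi p) (Rp p) V \<and> is_minimizer (Fm m chi p) (Rp p) V'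
                 \<longrightarrow> (\<exists>l>0. V' = (\<lambda>i. l * V i))))"
proof (intro conjI impI allI)
  fix X assume al: "alpha \<ge> 0" and c: "critical_point m chi alpha p X"
  have X: "X \<in> Rp p" using c unfolding critical_point_def by simp
  show "is_minimizer (Fma m chi alpha p) (Rp p) X"
    unfolding is_minimizer_def using X part1[OF assms(1) _ al _ c] assms by auto
next
  assume C: "chi = Cp m p"
  show "\<exists>V. is_minimizer (Fm m chi p) (Rp p) V" using part2[OF assms C] by blast
  fix V V' assume "is_minimizer (Fm m chi p) (Rp p) V \<and> is_minimizer (Fm m chi p) (Rp p) V'"
  then show "\<exists>l>0. V' = (\<lambda>i. l * V i)" using part2[OF assms C] by blast
qed

end
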